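(* Let $\Bbbk$ be an algebraically closed field of characteristic $0$, let $P=\Bbbk[x_1,\dots,x_n]$ be a quadratic Poisson algebra with Poisson enveloping algebra $(U(P),\alpha,\beta)$, and let $\phi$ be a graded Poisson automorphism of $P$. Then there exists a unique graded automorphism $\widetilde\phi$ of $U(P)$ such that $\alpha\circ\phi=\widetilde\phi\circ\alpha$ and $\beta\circ\phi=\widetilde\phi\circ\beta$; it is given by $\widetilde\phi(x_i)=\phi(x_i)$ and $\widetilde\phi(y_i)=\sum_{j=1}^n\frac{\partial\phi(x_i)}{\partial x_j}y_j$.
   Context: $P$ has the standard grading and is quadratic: $\{P_1,P_1\}\subseteq P_2$. $U(P)$ is the $\Bbbk$-algebra generated by $x_1,\dots,x_n,y_1,\dots,y_n$ (all of degree $1$) subject to $[x_i,x_j]=0$, $[y_i,y_j]=\sum_k\frac{\partial\{x_i,x_j\}}{\partial x_k}y_k$, $[y_i,x_j]=\{x_i,x_j\}$; the maps $\alpha,\beta:P\to U(P)$ are $\alpha(f)=f$ and $\beta(f)=\sum_{k=1}^n\frac{\partial f}{\partial x_k}y_k$. A graded Poisson automorphism of $P$ is a degree-preserving bijective map that is an algebra and Lie algebra homomorphism. *)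

theory Defs
  imports "HOL-Library.Poly_Mapping" "HOL-Algebra.QuotRing"
    "HOL-Computational_Algebra.Polynomial"
begin

text \<open>Variables are indexed by a finite linearly ordered type 'v (so n = CARD('v)).
  A polynomial is a finitely supported map from monomials (exponent vectors) to coefficients.\<close>

type_synonym ('v, 'k) mpoly = "('v \<Rightarrow>\<^sub>0 nat) \<Rightarrow>\<^sub>0 'k"

definition alg_closed_field :: "'k::field itself \<Rightarrow> bool" where
  "alg_closed_field _ \<longleftrightarrow> (\<forall>p :: 'k poly. degree p \<ge> 1 \<longrightarrow> (\<exists>x. poly p x = 0))"

definition mconst :: "'k::zero \<Rightarrow> ('v, 'k) mpoly" where
  "mconst c = Poly_Mapping.single 0 c"

definition mvar :: "'v \<Rightarrow> ('v, 'k::{zero,one}) mpoly" where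
  "mvar i = Poly_Mapping.single (Poly_Mapping.single i 1) 1"

definition mon_deg :: "('v::finite \<Rightarrow>\<^sub>0 nat) \<Rightarrow> nat" where
  "mon_deg m = (\<Sum>v\<in>UNIV. Poly_Mapping.lookup m v)"

definition mhomog :: "nat \<Rightarrow> ('v::finite, 'k::zero) mpoly set" where
  "mhomog d = {f. \<forall>m\<in>Poly_Mapping.keys f. mon_deg m = d}"

definition mpderiv :: "'v \<Rightarrow> ('v, 'k::comm_semiring_1) mpoly \<Rightarrow> ('v, 'k) mpoly" where
  "mpderiv i f = Abs_poly_mapping
     (\<lambda>m. of_nat (Poly_Mapping.lookup m i + 1) * Poly_Mapping.lookup f (m + Poly_Mapping.single i 1))"

definition poisson_bracket ::
  "(('v, 'k::field) mpoly \<Rightarrow> ('v, 'k) mpoly \<Rightarrow> ('v, 'k) mpoly) \<Rightarrow> bool" where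
  "poisson_bracket br \<longleftrightarrow>
     (\<forall>a b c. br (a + b) c = br a c + br b c) \<and>
     (\<forall>a b c. br (mconst c * a) b = mconst c * br a b) \<and>
     (\<forall>a b. br a b = - br b a) \<and>
     (\<forall>a b c. br a (br b c) + br b (br c a) + br c (br a b) = 0) \<and>
     (\<forall>a b c. br a (b * c) = br a b * c + b * br a c)"

definition quadratic_poisson ::
  "(('v::finite, 'k::field) mpoly \<Rightarrow> ('v, 'k) mpoly \<Rightarrow> ('v, 'k) mpoly) \<Rightarrow> bool" where
  "quadratic_poisson br \<longleftrightarrow> poisson_bracket br \<and>
     (\<forall>a\<in>mhomog 1. \<forall>b\<in>mhomog 1. br a b \<in> mhomog 2)"

definition graded_poisson_aut ::
  "(('v::finite, 'k::field) mpoly \<Rightarrow> ('v, 'k) mpoly \<Rightarrow> ('v, 'k) mpoly)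
   \<Rightarrow> (('v, 'k) mpoly \<Rightarrow> ('v, 'k) mpoly) \<Rightarrow> bool" where
  "graded_poisson_aut br \<phi> \<longleftrightarrow> bij \<phi> \<and>
     (\<forall>a b. \<phi> (a + b) = \<phi> a + \<phi> b) \<and>
     (\<forall>a b. \<phi> (a * b) = \<phi> a * \<phi> b) \<and>
     \<phi> 1 = 1 \<and>
     (\<forall>c a. \<phi> (mconst c * a) = mconst c * \<phi> a) \<and>
     (\<forall>a b. \<phi> (br a b) = br (\<phi> a) (\<phi> b)) \<and>
     (\<forall>d. \<phi> ` mhomog d \<subseteq> mhomog d)"

text \<open>Generators: Inl v is x_v, Inr v is y_v. Elements are finitely supported maps from
  words to coefficients; multiplication is concatenation of words.\<close>
type_synonym ('v, 'k) fa = "('v + 'v) list \<Rightarrow>\<^sub>0 'k"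

definition fa_mult :: "('v, 'k::semiring_0) fa \<Rightarrow> ('v, 'k) fa \<Rightarrow> ('v, 'k) fa" where
  "fa_mult f g = Abs_poly_mapping
     (\<lambda>w. \<Sum>i\<le>length w. Poly_Mapping.lookup f (take i w) * Poly_Mapping.lookup g (drop i w))"

definition FA :: "('v + 'v) list itself \<Rightarrow> 'k::field itself \<Rightarrow> (('v, 'k) fa) ring" where
  "FA _ _ = \<lparr>carrier = UNIV, monoid.mult = fa_mult,
            one = Poly_Mapping.single [] 1, zero = 0, add = (+)\<rparr>"

abbreviation FAlg :: "(('v, 'k::field) fa) ring" where
  "FAlg \<equiv> FA TYPE(('v + 'v) list) TYPE('k)"

definition fa_gen :: "'v + 'v \<Rightarrow> ('v, 'k::{zero,one}) fa" where
  "fa_gen g = Poly_Mapping.single [g] 1"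

definition fa_comm :: "('v, 'k::field) fa \<Rightarrow> ('v, 'k) fa \<Rightarrow> ('v, 'k) fa" where
  "fa_comm a b = fa_mult a b - fa_mult b a"

text \<open>Lift of a commutative polynomial into the x-part of the free algebra
  (monomials written in the increasing order of variables).\<close>
definition xword :: "('v::{finite,linorder} \<Rightarrow>\<^sub>0 nat) \<Rightarrow> ('v + 'v) list" where
  "xword m = concat (map (\<lambda>v. replicate (Poly_Mapping.lookup m v) (Inl v)) (sorted_list_of_set UNIV))"

definition fa_lift :: "('v::{finite,linorder}, 'k::field) mpoly \<Rightarrow> ('v, 'k) fa" where
  "fa_lift f = (\<Sum>m\<in>Poly_Mapping.keys f. Poly_Mapping.single (xword m) (Poly_Mapping.lookup f m))"

definition UP_rels ::
  "(('v::{finite,linorder}, 'k::field) mpoly \<Rightarrow> ('v, 'k) mpoly \<Rightarrow> ('v, 'k) mpoly)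
   \<Rightarrow> ('v, 'k) fa set" where
  "UP_rels br =
     (\<Union>i. \<Union>j.
       { fa_comm (fa_gen (Inl i)) (fa_gen (Inl j)),
         fa_comm (fa_gen (Inr i)) (fa_gen (Inr j))
           - (\<Sum>k\<in>UNIV. fa_mult (fa_lift (mpderiv k (br (mvar i) (mvar j)))) (fa_gen (Inr k))),
         fa_comm (fa_gen (Inr i)) (fa_gen (Inl j)) - fa_lift (br (mvar i) (mvar j)) })"

definition UP_ideal :: "(('v::{finite,linorder}, 'k::field) mpoly \<Rightarrow> ('v, 'k) mpoly \<Rightarrow> ('v, 'k) mpoly)
   \<Rightarrow> ('v, 'k) fa set" where
  "UP_ideal br = genideal FAlg (UP_rels br)"

definition UP :: "(('v::{finite,linorder}, 'k::field) mpoly \<Rightarrow> ('v, 'k) mpoly \<Rightarrow> ('v, 'k) mpoly)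
   \<Rightarrow> (('v, 'k) fa set) ring" where
  "UP br = FAlg Quot UP_ideal br"

definition up_class :: "(('v::{finite,linorder}, 'k::field) mpoly \<Rightarrow> ('v, 'k) mpoly \<Rightarrow> ('v, 'k) mpoly)
   \<Rightarrow> ('v, 'k) fa \<Rightarrow> ('v, 'k) fa set" where
  "up_class br a = UP_ideal br +>\<^bsub>FAlg\<^esub> a"

definition up_scalar where "up_scalar br c = up_class br (Poly_Mapping.single [] c)"

definition up_y where "up_y br i = up_class br (fa_gen (Inr i))"

definition up_homog :: "(('v::{finite,linorder}, 'k::field) mpoly \<Rightarrow> ('v, 'k) mpoly \<Rightarrow> ('v, 'k) mpoly)
   \<Rightarrow> nat \<Rightarrow> ('v, 'k) fa set set" where
  "up_homog br d = {up_class br f | f. \<forall>w\<in>Poly_Mapping.keys f. length w = d}"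

definition up_alpha :: "(('v::{finite,linorder}, 'k::field) mpoly \<Rightarrow> ('v, 'k) mpoly \<Rightarrow> ('v, 'k) mpoly)
   \<Rightarrow> ('v, 'k) mpoly \<Rightarrow> ('v, 'k) fa set" where
  "up_alpha br f = up_class br (fa_lift f)"

definition up_beta :: "(('v::{finite,linorder}, 'k::field) mpoly \<Rightarrow> ('v, 'k) mpoly \<Rightarrow> ('v, 'k) mpoly)
   \<Rightarrow> ('v, 'k) mpoly \<Rightarrow> ('v, 'k) fa set" where
  "up_beta br f = (\<Oplus>\<^bsub>UP br\<^esub> k\<in>UNIV. up_alpha br (mpderiv k f) \<otimes>\<^bsub>UP br\<^esub> up_y br k)"

definition up_graded_aut ::
  "(('v::{finite,linorder}, 'k::field) mpoly \<Rightarrow> ('v, 'k) mpoly \<Rightarrow> ('v, 'k) mpoly)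
   \<Rightarrow> (('v, 'k) fa set \<Rightarrow> ('v, 'k) fa set) \<Rightarrow> bool" where
  "up_graded_aut br \<psi> \<longleftrightarrow> \<psi> \<in> ring_iso (UP br) (UP br) \<and>
     (\<forall>c. \<forall>X\<in>carrier (UP br).
        \<psi> (up_scalar br c \<otimes>\<^bsub>UP br\<^esub> X) = up_scalar br c \<otimes>\<^bsub>UP br\<^esub> \<psi> X) \<and>
     (\<forall>d. \<psi> ` up_homog br d \<subseteq> up_homog br d)"

end

theory Submission
  imports Defs
begin

instantiation list :: (type) monoid_add
begin
definition zero_list_def: "(0::'a list) = []"
definition plus_list_def: "(xs::'a list) + ys = xs @ ys"
instance by standard (auto simp: zero_list_def plus_list_def)
end

lemma pm_expansion:
  fixes f :: "'a \<Rightarrow>\<^sub>0 'b::comm_monoid_add"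
  shows "f = (\<Sum>k\<in>Poly_Mapping.keys f. Poly_Mapping.single k (Poly_Mapping.lookup f k))"
proof (rule poly_mapping_eqI)
  fix j
  have "finite I \<Longrightarrow> Poly_Mapping.lookup (\<Sum>k\<in>I. Poly_Mapping.single k (Poly_Mapping.lookup f k)) j
        = (if j \<in> I then Poly_Mapping.lookup f j else 0)" for I
    by (induction I rule: finite_induct) (auto simp: lookup_single lookup_add when_def)
  then show "Poly_Mapping.lookup f j = Poly_Mapping.lookup (\<Sum>k\<in>Poly_Mapping.keys f. Poly_Mapping.single k (Poly_Mapping.lookup f k)) j"
    by (auto simp: in_keys_iff)
qed

lemma pm_induct [case_names zero single add]:
  fixes f :: "'a \<Rightarrow>\<^sub>0 'b::comm_monoid_add"
  assumes "P 0" and "\<And>k v. P (Poly_Mapping.single k v)" and "\<And>f g. P f \<Longrightarrow> P g \<Longrightarrow> P (f + g)"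
  shows "P f"
proof -
  have "finite I \<Longrightarrow> P (\<Sum>k\<in>I. Poly_Mapping.single k (Poly_Mapping.lookup f k))" for I
    by (induction I rule: finite_induct) (auto intro: assms)
  then show ?thesis by (subst pm_expansion) simp
qed

lemma lookup_fa_mult:
  "Poly_Mapping.lookup (fa_mult f g) w =
     (\<Sum>i\<le>length w. Poly_Mapping.lookup f (take i w) * Poly_Mapping.lookup g (drop i w))"
proof -
  have "{w. (\<Sum>i\<le>length w. Poly_Mapping.lookup f (take i w) * Poly_Mapping.lookup g (drop i w)) \<noteq> 0}
        \<subseteq> (\<lambda>(u,v). u @ v) ` (Poly_Mapping.keys f \<times> Poly_Mapping.keys g)"
  proof
    fix w assume "w \<in> {w. (\<Sum>i\<le>length w. Poly_Mapping.lookup f (take i w) * Poly_Mapping.lookup g (drop i w)) \<noteq> 0}"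
    then obtain i where "Poly_Mapping.lookup f (take i w) * Poly_Mapping.lookup g (drop i w) \<noteq> 0"
      by (auto elim: sum.not_neutral_contains_not_neutral)
    then have "take i w \<in> Poly_Mapping.keys f" "drop i w \<in> Poly_Mapping.keys g"
      by (auto simp: in_keys_iff)
    then show "w \<in> (\<lambda>(u,v). u @ v) ` (Poly_Mapping.keys f \<times> Poly_Mapping.keys g)"
      by (metis (no_types, lifting) append_take_drop_id case_prod_conv image_eqI mem_Sigma_iff)
  qed
  then have "finite {w. (\<Sum>i\<le>length w. Poly_Mapping.lookup f (take i w) * Poly_Mapping.lookup g (drop i w)) \<noteq> 0}"
    by (rule finite_subset) auto
  then show ?thesis unfolding fa_mult_def by (simp add: Abs_poly_mapping_inverse)
qed

lemma fa_mult_add_left: "fa_mult (f1 + f2) g = fa_mult f1 g + fa_mult f2 g"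
  by (rule poly_mapping_eqI) (simp add: lookup_fa_mult lookup_add distrib_right sum.distrib)

lemma fa_mult_add_right: "fa_mult g (f1 + f2) = fa_mult g f1 + fa_mult g f2"
  by (rule poly_mapping_eqI) (simp add: lookup_fa_mult lookup_add distrib_left sum.distrib)

lemma fa_mult_zero_left: "fa_mult 0 g = 0"
  by (rule poly_mapping_eqI) (simp add: lookup_fa_mult)

lemma fa_mult_zero_right: "fa_mult g 0 = 0"
  by (rule poly_mapping_eqI) (simp add: lookup_fa_mult)

lemma fa_mult_single: "fa_mult (Poly_Mapping.single u a) (Poly_Mapping.single v b) = Poly_Mapping.single (u @ v) (a * b)"
proof (rule poly_mapping_eqI)
  fix w
  have "Poly_Mapping.lookup (fa_mult (Poly_Mapping.single u a) (Poly_Mapping.single v b)) w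
     = (\<Sum>i\<le>length w. if i = length u \<and> w = u @ v then a * b else 0)"
    unfolding lookup_fa_mult
  proof (rule sum.cong[OF refl])
    fix i assume "i \<in> {..length w}"
    then have il: "i \<le> length w" by simp
    show "Poly_Mapping.lookup (Poly_Mapping.single u a) (take i w) * Poly_Mapping.lookup (Poly_Mapping.single v b) (drop i w)
        = (if i = length u \<and> w = u @ v then a * b else 0)"
    proof (cases "take i w = u \<and> drop i w = v")
      case True
      then have "w = u @ v" by (metis append_take_drop_id)
      moreover have "i = length u" using True il by auto
      ultimately show ?thesis using True by (simp)
    next
      case False
      then have "\<not> (i = length u \<and> w = u @ v)" by auto
      then show ?thesis using False by (auto simp: lookup_single when_def)
    qed
  qed
  also have "\<dots> = Poly_Mapping.lookup (Poly_Mapping.single (u @ v) (a * b)) w"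
    by (auto simp: lookup_single when_def)
  finally show "Poly_Mapping.lookup (fa_mult (Poly_Mapping.single u a) (Poly_Mapping.single v b)) w
     = Poly_Mapping.lookup (Poly_Mapping.single (u @ v) (a * b)) w" .
qed

lemma fa_mult_eq: "fa_mult f g = f * g"
proof (induction f rule: pm_induct)
  case zero then show ?case by (simp add: fa_mult_zero_left)
next
  case (single k v)
  show ?case
  proof (induction g rule: pm_induct)
    case zero then show ?case by (simp add: fa_mult_zero_right)
  next
    case (single k' v') then show ?case by (simp add: fa_mult_single mult_single plus_list_def)
  next
    case (add f g) then show ?case by (simp add: fa_mult_add_right distrib_left)
  qed
next
  case (add f1 f2) then show ?case by (simp add: fa_mult_add_left distrib_right)
qed

lemma FA_eq: "FA TYPE(('v + 'v) list) TYPE('k::field) = \<lparr>carrier = UNIV, monoid.mult = (*),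
            one = 1, zero = 0, add = (+)\<rparr>"
proof -
  have "Poly_Mapping.single ([]::('v+'v) list) (1::'k) = 1"
    by (metis single_one zero_list_def)
  moreover have "fa_mult = ((*) :: ('v,'k) fa \<Rightarrow> _)" by (intro ext) (rule fa_mult_eq)
  ultimately show ?thesis unfolding FA_def by simp
qed

lemma ring_FA: "ring (FA TYPE(('v + 'v) list) TYPE('k::field))"
  unfolding FA_eq
  apply (rule ringI)
     apply (rule abelian_groupI)
          apply (auto simp: algebra_simps intro: exI[of _ "- x" for x])
  apply (rule monoidI) apply (auto simp: algebra_simps)
  done

lemma ideal_UP: "ideal (UP_ideal br) (FA TYPE(('v::{finite,linorder} + 'v) list) TYPE('k::field))"
  unfolding UP_ideal_def by (rule ring.genideal_ideal[OF ring_FA]) (simp add: FA_eq)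

lemma rels_UP: "UP_rels br \<subseteq> UP_ideal br"
  unfolding UP_ideal_def by (rule ring.genideal_self[OF ring_FA]) (simp add: FA_eq)

definition fcong where "fcong br a b \<longleftrightarrow> a - b \<in> UP_ideal br"

lemma I_zero: "0 \<in> UP_ideal br"
  using additive_subgroup.zero_closed[OF ideal.axioms(1)[OF ideal_UP]] by (simp add: FA_eq)

lemma I_add: "a \<in> UP_ideal br \<Longrightarrow> b \<in> UP_ideal br \<Longrightarrow> a + b \<in> UP_ideal br"
  using additive_subgroup.a_closed[OF ideal.axioms(1)[OF ideal_UP]] by (simp add: FA_eq)

lemma I_lmult: "a \<in> UP_ideal br \<Longrightarrow> x * a \<in> UP_ideal br"
  using ideal.I_l_closed[OF ideal_UP] by (fastforce simp add: FA_eq)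

lemma I_rmult: "a \<in> UP_ideal br \<Longrightarrow> a * x \<in> UP_ideal br"
  using ideal.I_r_closed[OF ideal_UP] by (fastforce simp add: FA_eq)

lemma I_uminus: "a \<in> UP_ideal br \<Longrightarrow> - a \<in> UP_ideal br"
  using I_lmult[of a br "-1"] by simp

lemma I_diff: "a \<in> UP_ideal br \<Longrightarrow> b \<in> UP_ideal br \<Longrightarrow> a - b \<in> UP_ideal br"
  using I_add[OF _ I_uminus] by (metis diff_conv_add_uminus)

lemma fcong_refl [simp]: "fcong br a a"
  by (simp add: fcong_def I_zero)

lemma fcong_eq: "a = b \<Longrightarrow> fcong br a b"
  by simp

lemma fcong_sym: "fcong br a b \<Longrightarrow> fcong br b a"
  unfolding fcong_def using I_uminus by fastforce

lemma fcong_trans [trans]: "fcong br a b \<Longrightarrow> fcong br b c \<Longrightarrow> fcong br a c"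
  unfolding fcong_def using I_add by fastforce

lemma fcong_trans_eq1 [trans]: "a = b \<Longrightarrow> fcong br b c \<Longrightarrow> fcong br a c" by simp
lemma fcong_trans_eq2 [trans]: "fcong br a b \<Longrightarrow> b = c \<Longrightarrow> fcong br a c" by simp

lemma fcong_add: "fcong br a a' \<Longrightarrow> fcong br b b' \<Longrightarrow> fcong br (a + b) (a' + b')"
  unfolding fcong_def using I_add by (fastforce simp: algebra_simps)

lemma fcong_diff: "fcong br a a' \<Longrightarrow> fcong br b b' \<Longrightarrow> fcong br (a - b) (a' - b')"
  unfolding fcong_def using I_diff by (fastforce simp: algebra_simps)

lemma fcong_uminus: "fcong br a a' \<Longrightarrow> fcong br (- a) (- a')"
  unfolding fcong_def using I_uminus by (fastforce simp: algebra_simps)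

lemma fcong_mult: "fcong br a a' \<Longrightarrow> fcong br b b' \<Longrightarrow> fcong br (a * b) (a' * b')"
proof -
  assume "fcong br a a'" "fcong br b b'"
  then have "(a - a') * b \<in> UP_ideal br" "a' * (b - b') \<in> UP_ideal br"
    unfolding fcong_def by (auto intro: I_lmult I_rmult)
  then have "(a - a') * b + a' * (b - b') \<in> UP_ideal br" by (rule I_add)
  then show ?thesis unfolding fcong_def by (simp add: algebra_simps)
qed

lemma fcong_sum: "(\<And>i. i \<in> S \<Longrightarrow> fcong br (f i) (g i)) \<Longrightarrow> fcong br (sum f S) (sum g S)"
  by (induction S rule: infinite_finite_induct) (auto intro: fcong_add)

lemma fcong_zero_iff: "fcong br a 0 \<longleftrightarrow> a \<in> UP_ideal br"
  by (simp add: fcong_def)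

lemma mconst_0 [simp]: "mconst 0 = 0" by (simp add: mconst_def)
lemma mconst_1 [simp]: "mconst 1 = 1" by (simp add: mconst_def)
lemma mconst_add: "mconst (a + b) = mconst a + mconst b" by (simp add: mconst_def single_add)
lemma mconst_mult: "mconst (a * b) = mconst a * mconst b" by (simp add: mconst_def mult_single)

lemma lookup_mpderiv:
  "Poly_Mapping.lookup (mpderiv i f) m = of_nat (Poly_Mapping.lookup m i + 1) * Poly_Mapping.lookup f (m + Poly_Mapping.single i 1)"
proof -
  have "{m. of_nat (Poly_Mapping.lookup m i + 1) * Poly_Mapping.lookup f (m + Poly_Mapping.single i 1) \<noteq> 0}
     \<subseteq> (\<lambda>m. m + Poly_Mapping.single i 1) -` Poly_Mapping.keys f"
    by (auto simp: in_keys_iff)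
  moreover have "finite ((\<lambda>m. m + Poly_Mapping.single i (1::nat)) -` Poly_Mapping.keys f)"
    by (rule finite_vimageI) (auto simp: inj_on_def)
  ultimately have "finite {m. of_nat (Poly_Mapping.lookup m i + 1) * Poly_Mapping.lookup f (m + Poly_Mapping.single i 1) \<noteq> 0}"
    by (rule finite_subset)
  then show ?thesis unfolding mpderiv_def by (simp add: Abs_poly_mapping_inverse)
qed

lemma mpderiv_add: "mpderiv i (f + g) = mpderiv i f + mpderiv i g"
  by (rule poly_mapping_eqI) (simp add: lookup_mpderiv lookup_add distrib_left)

lemma mpderiv_zero [simp]: "mpderiv i 0 = 0"
  by (rule poly_mapping_eqI) (simp add: lookup_mpderiv)

lemma mpderiv_uminus: "mpderiv i (- f) = - mpderiv i (f::('v,'k::comm_ring_1) mpoly)"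
  by (rule poly_mapping_eqI) (simp add: lookup_mpderiv)

lemma mpderiv_diff: "mpderiv i (f - g) = mpderiv i f - mpderiv i (g::('v,'k::comm_ring_1) mpoly)"
  by (rule poly_mapping_eqI) (simp add: lookup_mpderiv lookup_minus algebra_simps)

lemma mpderiv_sum: "mpderiv i (sum f S) = (\<Sum>s\<in>S. mpderiv i (f s))"
  by (induction S rule: infinite_finite_induct) (auto simp: mpderiv_add)

lemma mpderiv_single0:
  assumes "Poly_Mapping.lookup m i = 0"
  shows "mpderiv i (Poly_Mapping.single m c) = 0"
proof (rule poly_mapping_eqI)
  fix n
  have "m \<noteq> n + Poly_Mapping.single i 1"
  proof
    assume "m = n + Poly_Mapping.single i 1"
    then have "Poly_Mapping.lookup m i = Poly_Mapping.lookup n i + 1" by (simp add: lookup_add)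
    with assms show False by simp
  qed
  then show "Poly_Mapping.lookup (mpderiv i (Poly_Mapping.single m c)) n = Poly_Mapping.lookup 0 n"
    by (simp add: lookup_mpderiv lookup_single when_def)
qed

lemma mpderiv_single1:
  "mpderiv i (Poly_Mapping.single (m + Poly_Mapping.single i 1) c) =
     Poly_Mapping.single m (of_nat (Poly_Mapping.lookup m i + 1) * c)"
  by (rule poly_mapping_eqI) (auto simp: lookup_mpderiv lookup_single when_def)

lemma split_monom:
  fixes m :: "'v \<Rightarrow>\<^sub>0 nat"
  assumes "Poly_Mapping.lookup m i \<noteq> 0"
  obtains m' where "m = m' + Poly_Mapping.single i 1"
proof -
  have "m = (m - Poly_Mapping.single i 1) + Poly_Mapping.single i 1"
    using assms by (intro poly_mapping_eqI) (auto simp: lookup_add lookup_minus lookup_single when_def)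
  then show ?thesis using that by blast
qed

lemma mpderiv_leibniz_single:
  fixes c d :: "'k::comm_semiring_1"
  shows "mpderiv i (Poly_Mapping.single m c * Poly_Mapping.single n d) =
     Poly_Mapping.single m c * mpderiv i (Poly_Mapping.single n d) + Poly_Mapping.single n d * mpderiv i (Poly_Mapping.single m c)"
proof (cases "Poly_Mapping.lookup m i = 0")
  case m0: True
  show ?thesis
  proof (cases "Poly_Mapping.lookup n i = 0")
    case True
    then show ?thesis using m0 by (simp add: mult_single mpderiv_single0 lookup_add)
  next
    case False
    then obtain n' where n: "n = n' + Poly_Mapping.single i 1" by (rule split_monom)
    have e: "Poly_Mapping.single m c * Poly_Mapping.single n d = Poly_Mapping.single ((m + n') + Poly_Mapping.single i 1) (c * d)"
      by (simp add: mult_single n add.assoc)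
    have "mpderiv i (Poly_Mapping.single m c * Poly_Mapping.single n d) = Poly_Mapping.single (m + n') (of_nat (Poly_Mapping.lookup (m + n') i + 1) * (c * d))"
      unfolding e by (rule mpderiv_single1)
    also have "\<dots> = Poly_Mapping.single m c * mpderiv i (Poly_Mapping.single n d)"
      unfolding n mpderiv_single1 mult_single using m0 by (simp add: lookup_add mult_ac)
    finally show ?thesis using m0 by (simp add: mpderiv_single0)
  qed
next
  case m1: False
  then obtain m' where m: "m = m' + Poly_Mapping.single i 1" by (rule split_monom)
  show ?thesis
  proof (cases "Poly_Mapping.lookup n i = 0")
    case True
    have e: "Poly_Mapping.single m c * Poly_Mapping.single n d = Poly_Mapping.single ((m' + n) + Poly_Mapping.single i 1) (c * d)"
      by (simp add: mult_single m add_ac)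
    have "mpderiv i (Poly_Mapping.single m c * Poly_Mapping.single n d) = Poly_Mapping.single (m' + n) (of_nat (Poly_Mapping.lookup (m' + n) i + 1) * (c * d))"
      unfolding e by (rule mpderiv_single1)
    also have "\<dots> = Poly_Mapping.single n d * mpderiv i (Poly_Mapping.single m c)"
      unfolding m mpderiv_single1 mult_single using True by (simp add: lookup_add mult_ac add_ac)
    finally show ?thesis using True by (simp add: mpderiv_single0)
  next
    case False
    then obtain n' where n: "n = n' + Poly_Mapping.single i 1" by (rule split_monom)
    have e: "Poly_Mapping.single m c * Poly_Mapping.single n d = Poly_Mapping.single ((m' + n' + Poly_Mapping.single i 1) + Poly_Mapping.single i 1) (c * d)"
      by (simp add: mult_single m n add_ac)
    have "mpderiv i (Poly_Mapping.single m c * Poly_Mapping.single n d) = Poly_Mapping.single (m' + n' + Poly_Mapping.single i 1) (of_nat (Poly_Mapping.lookup (m' + n' + Poly_Mapping.single i 1) i + 1) * (c * d))"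
      unfolding e by (rule mpderiv_single1)
    also have "\<dots> = Poly_Mapping.single m c * mpderiv i (Poly_Mapping.single n d) + Poly_Mapping.single n d * mpderiv i (Poly_Mapping.single m c)"
      unfolding m n mpderiv_single1 mult_single
      apply (simp add: lookup_add add_ac mult_ac distrib_left distrib_right)
      by (simp add: single_add[symmetric] add_ac)
    finally show ?thesis .
  qed
qed

lemma mpderiv_leibniz:
  fixes f g :: "('v, 'k::comm_semiring_1) mpoly"
  shows "mpderiv i (f * g) = f * mpderiv i g + g * mpderiv i f"
proof (induction f rule: pm_induct)
  case zero then show ?case by simp
next
  case (single k v)
  show ?case
  proof (induction g rule: pm_induct)
    case zero then show ?case by simp
  next
    case (single k' v') then show ?case by (rule mpderiv_leibniz_single)
  next
    case (add f g) then show ?case by (simp add: mpderiv_add algebra_simps)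
  qed
next
  case (add f1 f2) then show ?case by (simp add: mpderiv_add algebra_simps)
qed

lemma mpderiv_mconst [simp]: "mpderiv i (mconst c) = 0"
  unfolding mconst_def by (rule mpderiv_single0) simp

lemma mpderiv_mvar: "mpderiv i (mvar j) = (if i = j then 1 else 0)"
proof (cases "i = j")
  case True
  then show ?thesis unfolding mvar_def using mpderiv_single1[of i 0 1] by simp
next
  case False
  then show ?thesis unfolding mvar_def by (simp add: mpderiv_single0 lookup_single)
qed

lemma mpderiv_1 [simp]: "mpderiv i 1 = 0"
  using mpderiv_mconst[of i 1] by simp

section \<open>Words and monomials\<close>

definition wcnt :: "('v + 'v) list \<Rightarrow> ('v \<Rightarrow>\<^sub>0 nat)" where
  "wcnt w = sum_list (map (\<lambda>g. Poly_Mapping.single (case_sum id id g) 1) w)"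

lemma wcnt_Nil [simp]: "wcnt [] = 0" by (simp add: wcnt_def)
lemma wcnt_Cons [simp]: "wcnt (g # w) = Poly_Mapping.single (case_sum id id g) 1 + wcnt w" by (simp add: wcnt_def)
lemma wcnt_append [simp]: "wcnt (a @ b) = wcnt a + wcnt b" by (simp add: wcnt_def)

lemma wcnt_replicate [simp]: "wcnt (replicate k (Inl v)) = Poly_Mapping.single v k"
  by (induction k) (simp_all add: single_add[symmetric])

lemma wcnt_concat: "wcnt (concat ws) = sum_list (map wcnt ws)"
  by (induction ws) auto

lemma pm_sum_singles:
  fixes m :: "'v::finite \<Rightarrow>\<^sub>0 nat"
  shows "(\<Sum>v\<in>UNIV. Poly_Mapping.single v (Poly_Mapping.lookup m v)) = m"
  by (rule poly_mapping_eqI) (simp add: lookup_sum lookup_single when_def)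

lemma vs_props: "distinct (sorted_list_of_set (UNIV::'v::{finite,linorder} set))"
  "set (sorted_list_of_set (UNIV::'v set)) = UNIV"
  by simp_all

lemma wcnt_xword [simp]: "wcnt (xword m) = m"
proof -
  have "wcnt (xword m) = sum_list (map (\<lambda>v. Poly_Mapping.single v (Poly_Mapping.lookup m v)) (sorted_list_of_set UNIV))"
    unfolding xword_def by (simp add: wcnt_concat comp_def)
  also have "\<dots> = (\<Sum>v\<in>UNIV. Poly_Mapping.single v (Poly_Mapping.lookup m v))"
    by (simp add: sum_list_distinct_conv_sum_set)
  finally show ?thesis by (simp add: pm_sum_singles)
qed

lemma xword_Inl: "set (xword m) \<subseteq> range Inl"
  unfolding xword_def by auto

lemma xword_0 [simp]: "xword 0 = []"
  unfolding xword_def by simp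

lemma length_xword: "length (xword m) = mon_deg m"
proof -
  have "length (xword m) = sum_list (map (\<lambda>v. Poly_Mapping.lookup m v) (sorted_list_of_set UNIV))"
    unfolding xword_def by (simp add: length_concat comp_def)
  also have "\<dots> = mon_deg m" unfolding mon_deg_def by (simp add: sum_list_distinct_conv_sum_set)
  finally show ?thesis .
qed

lemma concat_delta:
  "distinct xs \<Longrightarrow> concat (map (\<lambda>v. replicate (if v = i then Suc 0 else 0) (Inl v)) xs) = (if i \<in> set xs then [Inl i] else [])"
  by (induction xs) auto

lemma xword_single: "xword (Poly_Mapping.single i 1) = [Inl i]"
proof -
  have "xword (Poly_Mapping.single i 1) = concat (map (\<lambda>v. replicate (if v = i then Suc 0 else 0) (Inl v)) (sorted_list_of_set UNIV))"
    unfolding xword_def by (simp add: lookup_single when_def eq_commute)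
  then show ?thesis by (simp add: concat_delta)
qed

lemma mpoly_induct [case_names const var add mult]:
  fixes f :: "('v::{finite,linorder}, 'k::comm_semiring_1) mpoly"
  assumes const: "\<And>c. P (mconst c)" and var: "\<And>i. P (mvar i)"
    and add: "\<And>f g. P f \<Longrightarrow> P g \<Longrightarrow> P (f + g)" and mult: "\<And>f g. P f \<Longrightarrow> P g \<Longrightarrow> P (f * g)"
  shows "P f"
proof (induction f rule: pm_induct)
  case zero then show ?case using const[of 0] by simp
next
  case (single m c)
  have w: "P (Poly_Mapping.single (wcnt w) 1)" for w :: "('v + 'v) list"
  proof (induction w)
    case Nil then show ?case using const[of 1] by (simp add: mconst_def)
  next
    case (Cons g w)
    have "Poly_Mapping.single (wcnt (g # w)) (1::'k) = mvar (case_sum id id g) * Poly_Mapping.single (wcnt w) 1"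
      by (simp add: mvar_def mult_single)
    then show ?case using mult[OF var Cons] by simp
  qed
  have eq: "Poly_Mapping.single m c = mconst c * Poly_Mapping.single (wcnt (xword m)) 1"
    by (simp add: mconst_def mult_single)
  show ?case by (subst eq) (rule mult[OF const w])
next
  case (add f g) then show ?case by (rule assms)
qed

lemma fa_lift_superset:
  assumes "finite S" "Poly_Mapping.keys f \<subseteq> S"
  shows "fa_lift f = (\<Sum>m\<in>S. Poly_Mapping.single (xword m) (Poly_Mapping.lookup f m))"
  unfolding fa_lift_def
  by (rule sum.mono_neutral_left) (use assms in \<open>auto simp: in_keys_iff\<close>)

lemma fa_lift_add: "fa_lift (f + g) = fa_lift f + fa_lift g"
proof -
  let ?S = "Poly_Mapping.keys f \<union> Poly_Mapping.keys g"
  have "fa_lift (f + g) = (\<Sum>m\<in>?S. Poly_Mapping.single (xword m) (Poly_Mapping.lookup (f + g) m))"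
    by (rule fa_lift_superset) (auto simp: keys_add)
  also have "\<dots> = (\<Sum>m\<in>?S. Poly_Mapping.single (xword m) (Poly_Mapping.lookup f m))
                + (\<Sum>m\<in>?S. Poly_Mapping.single (xword m) (Poly_Mapping.lookup g m))"
    by (simp add: lookup_add single_add sum.distrib)
  also have "\<dots> = fa_lift f + fa_lift g"
    by (subst (1 2) fa_lift_superset[of ?S]) auto
  finally show ?thesis .
qed

lemma fa_lift_0 [simp]: "fa_lift 0 = 0"
  by (simp add: fa_lift_def)

lemma fa_lift_uminus: "fa_lift (- f) = - fa_lift f"
  using fa_lift_add[of f "- f"] by (metis minus_unique fa_lift_0 add.right_inverse)

lemma fa_lift_diff: "fa_lift (f - g) = fa_lift f - fa_lift g"
  using fa_lift_add[of "f - g" g] by (simp add: algebra_simps)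

lemma fa_lift_sum: "fa_lift (sum f S) = (\<Sum>s\<in>S. fa_lift (f s))"
  by (induction S rule: infinite_finite_induct) (auto simp: fa_lift_add)

lemma fa_lift_single: "fa_lift (Poly_Mapping.single m c) = Poly_Mapping.single (xword m) c"
  by (subst fa_lift_superset[of "{m}"]) auto

lemma fa_lift_mconst: "fa_lift (mconst c) = Poly_Mapping.single [] c"
  by (simp add: mconst_def fa_lift_single)

lemma fa_lift_1: "fa_lift 1 = (1 :: ('v::{finite,linorder},'k::field) fa)"
  using fa_lift_mconst[of 1] by (simp add: zero_list_def[symmetric])

lemma fa_lift_mvar: "fa_lift (mvar i) = fa_gen (Inl i)"
  by (simp only: mvar_def fa_gen_def fa_lift_single xword_single)

lemma fa_lift_smult: "fa_lift (mconst c * f) = Poly_Mapping.single [] c * fa_lift f"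
proof (induction f rule: pm_induct)
  case zero then show ?case by simp
next
  case (single k v) then show ?case
    by (simp add: mconst_def mult_single fa_lift_single plus_list_def)
next
  case (add f g) then show ?case by (simp add: distrib_left fa_lift_add)
qed

section \<open>Free algebra computations\<close>

lemma single_mult_single: "Poly_Mapping.single (u::'a list) (a::'k::field) * Poly_Mapping.single v b = Poly_Mapping.single (u @ v) (a * b)"
  by (simp add: mult_single plus_list_def)

lemma fa_gen_mult: "fa_gen g * Poly_Mapping.single w c = Poly_Mapping.single (g # w) (c::'k::field)"
  by (simp add: fa_gen_def single_mult_single)

lemma scalar_central: "Poly_Mapping.single [] (c::'k::field) * x = x * Poly_Mapping.single [] c"
proof (induction x rule: pm_induct)
  case zero then show ?case by simp
next
  case (single k v) then show ?case by (simp add: single_mult_single mult.commute)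
next
  case (add f g) then show ?case by (simp add: algebra_simps)
qed

lemma fa_comm_eq: "fa_comm a b = a * b - b * a"
  by (simp add: fa_comm_def fa_mult_eq)

lemma adj_swap:
  assumes "fa_comm (fa_gen g1) (fa_gen g2) \<in> UP_ideal br"
  shows "fcong br (Poly_Mapping.single (a @ g1 # g2 # r) c) (Poly_Mapping.single (a @ g2 # g1 # r) c)"
proof -
  have "Poly_Mapping.single a 1 * fa_comm (fa_gen g1) (fa_gen g2) * Poly_Mapping.single r c \<in> UP_ideal br"
    using assms by (intro I_lmult I_rmult)
  moreover have "Poly_Mapping.single a 1 * fa_comm (fa_gen g1) (fa_gen g2) * Poly_Mapping.single r c
     = Poly_Mapping.single (a @ g1 # g2 # r) c - Poly_Mapping.single (a @ g2 # g1 # r) c"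
    by (simp add: fa_comm_eq fa_gen_def algebra_simps single_mult_single)
  ultimately show ?thesis by (simp add: fcong_def)
qed

lemma xx_comm: "fa_comm (fa_gen (Inl i)) (fa_gen (Inl j)) \<in> UP_ideal br"
  using rels_UP[of br] unfolding UP_rels_def by blast

lemma swap_past:
  assumes "set u \<subseteq> range Inl"
  shows "fcong br (Poly_Mapping.single (a @ Inl v # u @ r) c) (Poly_Mapping.single (a @ u @ Inl v # r) c)"
  using assms
proof (induction u arbitrary: a)
  case Nil then show ?case by simp
next
  case (Cons g u)
  then obtain w where g: "g = Inl w" by auto
  have "fcong br (Poly_Mapping.single (a @ Inl v # Inl w # u @ r) c) (Poly_Mapping.single (a @ Inl w # Inl v # u @ r) c)"
    by (rule adj_swap[OF xx_comm])
  also have "fcong br \<dots> (Poly_Mapping.single ((a @ [Inl w]) @ u @ Inl v # r) c)"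
    using Cons.IH[of "a @ [Inl w]"] Cons.prems by simp
  finally show ?case using g by simp
qed

definition xw :: "('v \<Rightarrow>\<^sub>0 nat) \<Rightarrow> 'v list \<Rightarrow> ('v + 'v) list" where
  "xw m xs = concat (map (\<lambda>u. replicate (Poly_Mapping.lookup m u) (Inl u)) xs)"

lemma xw_Cons [simp]: "xw m (u # xs) = replicate (Poly_Mapping.lookup m u) (Inl u) @ xw m xs"
  by (simp add: xw_def)

lemma xw_Nil [simp]: "xw m [] = []"
  by (simp add: xw_def)

lemma xw_other: "v \<notin> set xs \<Longrightarrow> xw (m + Poly_Mapping.single v 1) xs = xw m xs"
  by (induction xs) (auto simp: lookup_add lookup_single)

lemma insert_x:
  assumes "distinct xs" "v \<in> set xs"
  shows "fcong br (Poly_Mapping.single (a @ Inl v # xw m xs) c) (Poly_Mapping.single (a @ xw (m + Poly_Mapping.single v 1) xs) c)"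
  using assms
proof (induction xs arbitrary: a)
  case Nil then show ?case by simp
next
  case (Cons u xs)
  show ?case
  proof (cases "u = v")
    case True
    then have "v \<notin> set xs" using Cons.prems by auto
    then show ?thesis using True by (simp add: xw_other[simplified] lookup_add lookup_single)
  next
    case False
    then have v: "v \<in> set xs" "distinct xs" using Cons.prems by auto
    have "fcong br (Poly_Mapping.single (a @ Inl v # replicate (Poly_Mapping.lookup m u) (Inl u) @ xw m xs) c)
                   (Poly_Mapping.single (a @ replicate (Poly_Mapping.lookup m u) (Inl u) @ Inl v # xw m xs) c)"
      by (rule swap_past) auto
    also have "fcong br \<dots> (Poly_Mapping.single ((a @ replicate (Poly_Mapping.lookup m u) (Inl u)) @ xw (m + Poly_Mapping.single v 1) xs) c)"
      using Cons.IH[OF v(2) v(1), of "a @ replicate (Poly_Mapping.lookup m u) (Inl u)"] by simp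
    finally show ?thesis using False by (simp add: lookup_add lookup_single)
  qed
qed

lemma xword_xw: "xword m = xw m (sorted_list_of_set UNIV)"
  by (simp add: xword_def xw_def)

lemma key_K: "fcong br (fa_gen (Inl v) * Poly_Mapping.single (xword m) c) (Poly_Mapping.single (xword (m + Poly_Mapping.single v 1)) c)"
  using insert_x[of "sorted_list_of_set UNIV" v br "[]" m c]
  by (simp add: fa_gen_mult xword_xw)

lemma x_word_lift:
  assumes "set w \<subseteq> range Inl"
  shows "fcong br (Poly_Mapping.single w c) (fa_lift (Poly_Mapping.single (wcnt w) c))"
  using assms
proof (induction w arbitrary: c)
  case Nil then show ?case by (simp add: fa_lift_single)
next
  case (Cons g w)
  then obtain v where g: "g = Inl v" by auto
  have "Poly_Mapping.single (g # w) c = fa_gen (Inl v) * Poly_Mapping.single w c" by (simp add: fa_gen_mult g)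
  also have "fcong br \<dots> (fa_gen (Inl v) * Poly_Mapping.single (xword (wcnt w)) c)"
    using Cons by (auto intro: fcong_mult simp: fa_lift_single)
  also have "fcong br \<dots> (Poly_Mapping.single (xword (wcnt w + Poly_Mapping.single v 1)) c)"
    by (rule key_K)
  also have "\<dots> = fa_lift (Poly_Mapping.single (wcnt (g # w)) c)"
    by (simp add: g fa_lift_single add.commute)
  finally show ?case .
qed

lemma fa_lift_mult: "fcong br (fa_lift (f * g)) (fa_lift f * fa_lift g)"
proof (induction f rule: pm_induct)
  case zero then show ?case by simp
next
  case (single m a)
  show ?case
  proof (induction g rule: pm_induct)
    case zero then show ?case by simp
  next
    case (single n b)
    have "fcong br (Poly_Mapping.single (xword m @ xword n) (a * b)) (fa_lift (Poly_Mapping.single (wcnt (xword m @ xword n)) (a * b)))"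
      by (rule x_word_lift) (use xword_Inl in auto)
    then show ?case by (simp add: mult_single fa_lift_single plus_list_def fcong_sym)
  next
    case (add g1 g2) then show ?case by (simp add: distrib_left fa_lift_add fcong_add)
  qed
next
  case (add f1 f2) then show ?case by (simp add: distrib_right fa_lift_add fcong_add)
qed

lemma fa_lift_comm: "fcong br (fa_lift f * fa_lift g) (fa_lift g * fa_lift f)"
  by (metis fa_lift_mult fcong_sym fcong_trans mult.commute)

context
  fixes br :: "('v::{finite,linorder}, 'k::field) mpoly \<Rightarrow> ('v, 'k) mpoly \<Rightarrow> ('v, 'k) mpoly"
  assumes PB: "poisson_bracket br"
begin

lemma br_add_left: "br (a + b) c = br a c + br b c"
  using PB unfolding poisson_bracket_def by blast

lemma br_antisym: "br a b = - br b a"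
  using PB unfolding poisson_bracket_def by blast

lemma br_add_right: "br c (a + b) = br c a + br c b"
  by (metis br_add_left br_antisym minus_add_distrib)

lemma br_leibniz_right: "br a (b * c) = br a b * c + b * br a c"
  using PB unfolding poisson_bracket_def by blast

lemma br_leibniz_left: "br (a * b) c = br a c * b + a * br b c"
proof -
  have "br (a * b) c = - br c (a * b)" by (rule br_antisym)
  also have "\<dots> = - (br c a * b + a * br c b)" by (simp add: br_leibniz_right)
  also have "\<dots> = br a c * b + a * br b c"
    using br_antisym[of c a] br_antisym[of c b] by simp
  finally show ?thesis .
qed

lemma br_1_right [simp]: "br a 1 = 0"
proof -
  have "br a 1 = br a 1 + br a 1" using br_leibniz_right[of a 1 1] by simp
  then show ?thesis by (metis add_cancel_right_right)
qed

lemma br_smult_left: "br (mconst c * a) b = mconst c * br a b"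
  using PB unfolding poisson_bracket_def by blast

lemma br_smult_right: "br a (mconst c * b) = mconst c * br a b"
  by (metis br_antisym br_smult_left mult_minus_right)

lemma br_const_right [simp]: "br a (mconst c) = 0"
  using br_smult_right[of a c 1] by simp

lemma br_const_left [simp]: "br (mconst c) a = 0"
  using br_antisym[of "mconst c" a] by simp

end

definition fY :: "'v \<Rightarrow> ('v, 'k::field) fa" where "fY k = fa_gen (Inr k)"

definition fB :: "('v::{finite,linorder}, 'k::field) mpoly \<Rightarrow> ('v, 'k) fa" where
  "fB f = (\<Sum>k\<in>UNIV. fa_lift (mpderiv k f) * fY k)"

definition cm :: "('v, 'k::field) fa \<Rightarrow> ('v, 'k) fa \<Rightarrow> ('v, 'k) fa" where
  "cm a b = a * b - b * a"

lemma cm_mult_right: "cm y (a * b) = a * cm y b + cm y a * b"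
  by (simp add: cm_def algebra_simps)
lemma cm_mult_left: "cm (a * b) y = a * cm b y + cm a y * b"
  by (simp add: cm_def algebra_simps)
lemma cm_add_right: "cm y (a + b) = cm y a + cm y b"
  by (simp add: cm_def algebra_simps)
lemma cm_add_left: "cm (a + b) y = cm a y + cm b y"
  by (simp add: cm_def algebra_simps)
lemma cm_antisym: "cm a b = - cm b a"
  by (simp add: cm_def algebra_simps)
lemma cm_zero [simp]: "cm a 0 = 0" "cm 0 a = 0"
  by (simp_all add: cm_def)
lemma cm_scalar [simp]: "cm a (Poly_Mapping.single [] c) = 0"
  by (simp add: cm_def scalar_central)
lemma fcong_cm: "fcong br a a' \<Longrightarrow> fcong br b b' \<Longrightarrow> fcong br (cm a b) (cm a' b')"
  unfolding cm_def by (intro fcong_diff fcong_mult)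

lemma fB_add: "fB (f + g) = fB f + fB g"
  by (simp add: fB_def mpderiv_add fa_lift_add distrib_right sum.distrib)

lemma fB_0 [simp]: "fB 0 = 0"
  by (simp add: fB_def)

lemma fB_mconst [simp]: "fB (mconst c) = 0"
  by (simp add: fB_def)

lemma fB_mvar: "fB (mvar i) = fY i"
proof -
  have "fB (mvar i) = (\<Sum>k\<in>UNIV. if k = i then fY k else 0)"
    unfolding fB_def by (rule sum.cong) (auto simp: mpderiv_mvar fa_lift_1)
  then show ?thesis by simp
qed

lemma fB_smult: "fB (mconst c * f) = Poly_Mapping.single [] c * fB f"
  by (simp add: fB_def mpderiv_leibniz fa_lift_smult sum_distrib_left mult.assoc)

lemma fB_mult: "fcong br (fB (f * g)) (fa_lift f * fB g + fa_lift g * fB f)"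
proof -
  have "fB (f * g) = (\<Sum>k\<in>UNIV. (fa_lift (f * mpderiv k g) + fa_lift (g * mpderiv k f)) * fY k)"
    by (simp add: fB_def mpderiv_leibniz fa_lift_add)
  also have "fcong br \<dots> (\<Sum>k\<in>UNIV. (fa_lift f * fa_lift (mpderiv k g) + fa_lift g * fa_lift (mpderiv k f)) * fY k)"
    by (intro fcong_sum fcong_mult fcong_add fa_lift_mult fcong_refl)
  also have "\<dots> = fa_lift f * fB g + fa_lift g * fB f"
    by (simp add: fB_def sum_distrib_left distrib_right sum.distrib mult.assoc)
  finally show ?thesis .
qed

lemma rel_yx: "fcong br (cm (fY i) (fa_lift (mvar j))) (fa_lift (br (mvar i) (mvar j)))"
proof -
  have "fa_comm (fa_gen (Inr i)) (fa_gen (Inl j)) - fa_lift (br (mvar i) (mvar j)) \<in> UP_ideal br"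
    using rels_UP[of br] unfolding UP_rels_def by blast
  then show ?thesis by (simp add: fcong_def cm_def fY_def fa_lift_mvar fa_comm_eq)
qed

lemma rel_yy: "fcong br (cm (fY i) (fY j)) (fB (br (mvar i) (mvar j)))"
proof -
  have "fa_comm (fa_gen (Inr i)) (fa_gen (Inr j))
           - (\<Sum>k\<in>UNIV. fa_mult (fa_lift (mpderiv k (br (mvar i) (mvar j)))) (fa_gen (Inr k))) \<in> UP_ideal br"
    using rels_UP[of br] unfolding UP_rels_def by blast
  then show ?thesis by (simp add: fcong_def cm_def fY_def fB_def fa_comm_eq fa_mult_eq)
qed

lemma lift_mult_sym: "fcong br (fa_lift f * fa_lift g) (fa_lift (f * g))"
  by (rule fcong_sym[OF fa_lift_mult])

lemma cm_lift_lift: "fcong br (cm (fa_lift f) (fa_lift g)) 0"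
  unfolding cm_def using fa_lift_comm[of br f g] by (simp add: fcong_def)

section \<open>Commutation identities in U(P)\<close>

context
  fixes br :: "('v::{finite,linorder}, 'k::field) mpoly \<Rightarrow> ('v, 'k) mpoly \<Rightarrow> ('v, 'k) mpoly"
  assumes PB: "poisson_bracket br"
begin

lemma cm_Y_lift: "fcong br (cm (fY i) (fa_lift g)) (fa_lift (br (mvar i) g))"
proof (induction g rule: mpoly_induct)
  case (const c) then show ?case by (simp add: fa_lift_mconst br_const_right[OF PB])
next
  case (var j) then show ?case by (rule rel_yx)
next
  case (add f g) then show ?case
    by (simp add: fa_lift_add cm_add_right br_add_right[OF PB] fcong_add)
next
  case (mult g h)
  have "fcong br (cm (fY i) (fa_lift (g * h))) (cm (fY i) (fa_lift g * fa_lift h))"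
    by (intro fcong_cm fcong_refl fa_lift_mult)
  also have "\<dots> = fa_lift g * cm (fY i) (fa_lift h) + cm (fY i) (fa_lift g) * fa_lift h"
    by (rule cm_mult_right)
  also have "fcong br \<dots> (fa_lift g * fa_lift (br (mvar i) h) + fa_lift (br (mvar i) g) * fa_lift h)"
    by (intro fcong_add fcong_mult fcong_refl mult)
  also have "fcong br \<dots> (fa_lift (g * br (mvar i) h) + fa_lift (br (mvar i) g * h))"
    by (intro fcong_add lift_mult_sym)
  also have "\<dots> = fa_lift (br (mvar i) (g * h))"
    by (simp add: br_leibniz_right[OF PB] fa_lift_add add.commute)
  finally show ?case .
qed

lemma cm_B_lift: "fcong br (cm (fB f) (fa_lift g)) (fa_lift (br f g))"
proof (induction f arbitrary: g rule: mpoly_induct)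
  case (const c) then show ?case by (simp add: br_const_left[OF PB])
next
  case (var i) then show ?case by (simp add: fB_mvar cm_Y_lift)
next
  case (add f1 f2) then show ?case
    by (simp add: fB_add fa_lift_add cm_add_left br_add_left[OF PB] fcong_add)
next
  case (mult f1 f2)
  have "fcong br (cm (fB (f1 * f2)) (fa_lift g)) (cm (fa_lift f1 * fB f2 + fa_lift f2 * fB f1) (fa_lift g))"
    by (intro fcong_cm fcong_refl fB_mult)
  also have "\<dots> = fa_lift f1 * cm (fB f2) (fa_lift g) + cm (fa_lift f1) (fa_lift g) * fB f2
       + (fa_lift f2 * cm (fB f1) (fa_lift g) + cm (fa_lift f2) (fa_lift g) * fB f1)"
    by (simp add: cm_add_left cm_mult_left)
  also have "fcong br \<dots> (fa_lift f1 * fa_lift (br f2 g) + 0 * fB f2 + (fa_lift f2 * fa_lift (br f1 g) + 0 * fB f1))"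
    by (intro fcong_add fcong_mult fcong_refl mult cm_lift_lift)
  also have "fcong br \<dots> (fa_lift (f1 * br f2 g) + fa_lift (br f1 g * f2))"
    by (simp only: mult_zero_left add_0_right mult.commute[of "br f1 g" f2]) (intro fcong_add lift_mult_sym)
  also have "\<dots> = fa_lift (br (f1 * f2) g)"
    by (simp add: br_leibniz_left[OF PB] fa_lift_add add.commute)
  finally show ?case .
qed

lemma cm_Y_B: "fcong br (cm (fY i) (fB g)) (fB (br (mvar i) g))"
proof (induction g rule: mpoly_induct)
  case (const c) then show ?case by (simp add: br_const_right[OF PB])
next
  case (var j) then show ?case by (simp add: fB_mvar rel_yy)
next
  case (add f g) then show ?case
    by (simp add: fB_add cm_add_right br_add_right[OF PB] fcong_add)
next
  case (mult g h)
  let ?x = "mvar i"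
  have "fcong br (cm (fY i) (fB (g * h))) (cm (fY i) (fa_lift g * fB h + fa_lift h * fB g))"
    by (intro fcong_cm fcong_refl fB_mult)
  also have "\<dots> = fa_lift g * cm (fY i) (fB h) + cm (fY i) (fa_lift g) * fB h
       + (fa_lift h * cm (fY i) (fB g) + cm (fY i) (fa_lift h) * fB g)"
    by (simp add: cm_add_right cm_mult_right)
  also have "fcong br \<dots> (fa_lift g * fB (br ?x h) + fa_lift (br ?x g) * fB h
       + (fa_lift h * fB (br ?x g) + fa_lift (br ?x h) * fB g))"
    by (intro fcong_add fcong_mult fcong_refl mult cm_Y_lift)
  also have "\<dots> = (fa_lift g * fB (br ?x h) + fa_lift (br ?x h) * fB g)
       + (fa_lift (br ?x g) * fB h + fa_lift h * fB (br ?x g))"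
    by (simp add: algebra_simps)
  also have "fcong br \<dots> (fB (g * br ?x h) + fB (br ?x g * h))"
    by (intro fcong_add fcong_sym[OF fB_mult])
  also have "\<dots> = fB (br ?x (g * h))"
    by (simp add: br_leibniz_right[OF PB] fB_add add.commute)
  finally show ?case .
qed

lemma cm_B_B: "fcong br (cm (fB f) (fB g)) (fB (br f g))"
proof (induction f arbitrary: g rule: mpoly_induct)
  case (const c) then show ?case by (simp add: br_const_left[OF PB])
next
  case (var i) then show ?case by (simp add: fB_mvar cm_Y_B)
next
  case (add f1 f2) then show ?case
    by (simp add: fB_add cm_add_left br_add_left[OF PB] fcong_add)
next
  case (mult f1 f2)
  have lb: "fcong br (cm (fa_lift f) (fB g)) (fa_lift (br f g))" for f
  proof -
    have "cm (fa_lift f) (fB g) = - cm (fB g) (fa_lift f)" by (rule cm_antisym)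
    also have "fcong br \<dots> (- fa_lift (br g f))" by (intro fcong_uminus cm_B_lift)
    also have "\<dots> = fa_lift (br f g)" by (simp add: br_antisym[OF PB, of g f] fa_lift_uminus)
    finally show ?thesis .
  qed
  have "fcong br (cm (fB (f1 * f2)) (fB g)) (cm (fa_lift f1 * fB f2 + fa_lift f2 * fB f1) (fB g))"
    by (intro fcong_cm fcong_refl fB_mult)
  also have "\<dots> = fa_lift f1 * cm (fB f2) (fB g) + cm (fa_lift f1) (fB g) * fB f2
       + (fa_lift f2 * cm (fB f1) (fB g) + cm (fa_lift f2) (fB g) * fB f1)"
    by (simp add: cm_add_left cm_mult_left)
  also have "fcong br \<dots> (fa_lift f1 * fB (br f2 g) + fa_lift (br f1 g) * fB f2
       + (fa_lift f2 * fB (br f1 g) + fa_lift (br f2 g) * fB f1))"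
    by (intro fcong_add fcong_mult fcong_refl mult lb)
  also have "\<dots> = (fa_lift (br f1 g) * fB f2 + fa_lift f2 * fB (br f1 g))
       + (fa_lift f1 * fB (br f2 g) + fa_lift (br f2 g) * fB f1)"
    by (simp add: algebra_simps)
  also have "fcong br \<dots> (fB (br f1 g * f2) + fB (f1 * br f2 g))"
    by (intro fcong_add fcong_sym[OF fB_mult])
  also have "\<dots> = fB (br (f1 * f2) g)"
    by (simp add: br_leibniz_left[OF PB] fB_add)
  finally show ?case .
qed

end

section \<open>Extension of generator assignments to the free algebra\<close>

definition wprod :: "('v + 'v \<Rightarrow> ('v, 'k::field) fa) \<Rightarrow> ('v + 'v) list \<Rightarrow> ('v, 'k) fa" where
  "wprod G w = prod_list (map G w)"

definition fa_ext :: "('v + 'v \<Rightarrow> ('v, 'k::field) fa) \<Rightarrow> ('v, 'k) fa \<Rightarrow> ('v, 'k) fa" where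
  "fa_ext G f = (\<Sum>w\<in>Poly_Mapping.keys f. Poly_Mapping.single [] (Poly_Mapping.lookup f w) * wprod G w)"

lemma wprod_append: "wprod G (u @ v) = wprod G u * wprod G v"
  by (simp add: wprod_def)

lemma fa_ext_superset:
  assumes "finite S" "Poly_Mapping.keys f \<subseteq> S"
  shows "fa_ext G f = (\<Sum>w\<in>S. Poly_Mapping.single [] (Poly_Mapping.lookup f w) * wprod G w)"
  unfolding fa_ext_def
  by (rule sum.mono_neutral_left) (use assms in \<open>auto simp: in_keys_iff\<close>)

lemma fa_ext_add: "fa_ext G (f + g) = fa_ext G f + fa_ext G g"
proof -
  let ?S = "Poly_Mapping.keys f \<union> Poly_Mapping.keys g"
  have "fa_ext G (f + g) = (\<Sum>w\<in>?S. Poly_Mapping.single [] (Poly_Mapping.lookup (f + g) w) * wprod G w)"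
    by (rule fa_ext_superset) (auto simp: keys_add)
  also have "\<dots> = (\<Sum>w\<in>?S. Poly_Mapping.single [] (Poly_Mapping.lookup f w) * wprod G w)
                + (\<Sum>w\<in>?S. Poly_Mapping.single [] (Poly_Mapping.lookup g w) * wprod G w)"
    by (simp add: lookup_add single_add sum.distrib distrib_right)
  also have "\<dots> = fa_ext G f + fa_ext G g"
    by (subst (1 2) fa_ext_superset[of ?S]) auto
  finally show ?thesis .
qed

lemma fa_ext_0 [simp]: "fa_ext G 0 = 0"
  by (simp add: fa_ext_def)

lemma fa_ext_uminus: "fa_ext G (- f) = - fa_ext G f"
  using fa_ext_add[of G f "- f"] by (metis minus_unique fa_ext_0 add.right_inverse)

lemma fa_ext_diff: "fa_ext G (f - g) = fa_ext G f - fa_ext G g"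
  using fa_ext_add[of G "f - g" g] by (simp add: algebra_simps)

lemma fa_ext_sum: "fa_ext G (sum f S) = (\<Sum>s\<in>S. fa_ext G (f s))"
  by (induction S rule: infinite_finite_induct) (auto simp: fa_ext_add)

lemma fa_ext_single: "fa_ext G (Poly_Mapping.single w c) = Poly_Mapping.single [] c * wprod G w"
  by (subst fa_ext_superset[of "{w}"]) auto

lemma fa_ext_mult: "fa_ext G (f * g) = fa_ext G f * fa_ext G g"
proof (induction f rule: pm_induct)
  case zero then show ?case by simp
next
  case (single u a)
  show ?case
  proof (induction g rule: pm_induct)
    case zero then show ?case by simp
  next
    case (single v b)
    have "Poly_Mapping.single [] (a * b) * (wprod G u * wprod G v)
        = (Poly_Mapping.single [] a * wprod G u) * (Poly_Mapping.single [] b * wprod G v)"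
    proof -
      have "Poly_Mapping.single [] (a * b) = Poly_Mapping.single [] a * Poly_Mapping.single [] b"
        by (simp add: single_mult_single)
      moreover have "wprod G u * Poly_Mapping.single [] b = Poly_Mapping.single [] b * wprod G u"
        by (simp add: scalar_central)
      ultimately show ?thesis
        by (metis (no_types, lifting) mult.assoc)
    qed
    then show ?case by (simp add: single_mult_single fa_ext_single wprod_append)
  next
    case (add g1 g2) then show ?case by (simp add: distrib_left fa_ext_add)
  qed
next
  case (add f1 f2) then show ?case by (simp add: distrib_right fa_ext_add)
qed

lemma one_fa: "(1 :: ('v, 'k::field) fa) = Poly_Mapping.single [] 1"
  by (metis single_one zero_list_def)

lemma fa_ext_1 [simp]: "fa_ext G 1 = 1"
  by (simp add: one_fa fa_ext_single wprod_def single_mult_single)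

lemma fa_ext_scalar [simp]: "fa_ext G (Poly_Mapping.single [] c) = Poly_Mapping.single [] c"
  by (simp add: fa_ext_single wprod_def)

lemma fa_ext_gen [simp]: "fa_ext G (fa_gen g) = G g"
  by (simp add: fa_gen_def fa_ext_single wprod_def one_fa[symmetric])

lemma wprod_gen: "wprod fa_gen w = Poly_Mapping.single w 1"
  by (induction w) (simp_all add: wprod_def one_fa fa_gen_mult[simplified])

lemma fa_ext_id: "fa_ext fa_gen f = f"
proof (induction f rule: pm_induct)
  case zero then show ?case by simp
next
  case (single k v) then show ?case by (simp add: fa_ext_single wprod_gen single_mult_single)
next
  case (add f g) then show ?case by (simp add: fa_ext_add)
qed

lemma fa_ext_ring_hom: "fa_ext G \<in> ring_hom (FA TYPE(('v + 'v) list) TYPE('k::field)) (FA TYPE(('v + 'v) list) TYPE('k))"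
  by (rule ring_hom_memI) (auto simp: FA_eq fa_ext_mult fa_ext_add)

definition ahom :: "(('v::{finite,linorder}, 'k::field) mpoly \<Rightarrow> ('v, 'k) mpoly) \<Rightarrow> bool" where
  "ahom \<phi> \<longleftrightarrow> (\<forall>a b. \<phi> (a + b) = \<phi> a + \<phi> b) \<and> (\<forall>a b. \<phi> (a * b) = \<phi> a * \<phi> b) \<and> \<phi> 1 = 1 \<and>
     (\<forall>c a. \<phi> (mconst c * a) = mconst c * \<phi> a)"

definition Gphi :: "(('v::{finite,linorder}, 'k::field) mpoly \<Rightarrow> ('v, 'k) mpoly) \<Rightarrow> 'v + 'v \<Rightarrow> ('v, 'k) fa" where
  "Gphi \<phi> g = (case g of Inl i \<Rightarrow> fa_lift (\<phi> (mvar i)) | Inr i \<Rightarrow> fB (\<phi> (mvar i)))"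

context
  fixes br :: "('v::{finite,linorder}, 'k::field) mpoly \<Rightarrow> ('v, 'k) mpoly \<Rightarrow> ('v, 'k) mpoly"
    and \<phi> :: "('v, 'k) mpoly \<Rightarrow> ('v, 'k) mpoly"
  assumes PB: "poisson_bracket br" and AH: "ahom \<phi>" and LIE: "\<And>a b. \<phi> (br a b) = br (\<phi> a) (\<phi> b)"
begin

lemma phi_add: "\<phi> (a + b) = \<phi> a + \<phi> b" using AH unfolding ahom_def by blast
lemma phi_mult: "\<phi> (a * b) = \<phi> a * \<phi> b" using AH unfolding ahom_def by blast
lemma phi_1: "\<phi> 1 = 1" using AH unfolding ahom_def by blast
lemma phi_smult: "\<phi> (mconst c * a) = mconst c * \<phi> a" using AH unfolding ahom_def by blast
lemma phi_0: "\<phi> 0 = 0" using phi_add[of 0 0] by (metis add_0 add_cancel_right_right)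
lemma phi_mconst: "\<phi> (mconst c) = mconst c" using phi_smult[of c 1] by (simp add: phi_1)

lemma wprod_x:
  assumes "set w \<subseteq> range Inl"
  shows "fcong br (wprod (Gphi \<phi>) w) (fa_lift (\<phi> (Poly_Mapping.single (wcnt w) 1)))"
  using assms
proof (induction w)
  case Nil then show ?case by (simp add: wprod_def phi_1 fa_lift_1)
next
  case (Cons g w)
  then obtain v where g: "g = Inl v" by auto
  have "wprod (Gphi \<phi>) (g # w) = fa_lift (\<phi> (mvar v)) * wprod (Gphi \<phi>) w"
    by (simp add: wprod_def Gphi_def g)
  also have "fcong br \<dots> (fa_lift (\<phi> (mvar v)) * fa_lift (\<phi> (Poly_Mapping.single (wcnt w) 1)))"
    using Cons by (intro fcong_mult fcong_refl) auto
  also have "fcong br \<dots> (fa_lift (\<phi> (mvar v) * \<phi> (Poly_Mapping.single (wcnt w) 1)))"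
    by (rule lift_mult_sym)
  also have "\<dots> = fa_lift (\<phi> (Poly_Mapping.single (wcnt (g # w)) 1))"
    by (simp add: phi_mult[symmetric] mvar_def mult_single g)
  finally show ?case .
qed

lemma Phi_lift: "fcong br (fa_ext (Gphi \<phi>) (fa_lift h)) (fa_lift (\<phi> h))"
proof (induction h rule: pm_induct)
  case zero then show ?case by (simp add: phi_0)
next
  case (single m c)
  have "fa_ext (Gphi \<phi>) (fa_lift (Poly_Mapping.single m c)) = Poly_Mapping.single [] c * wprod (Gphi \<phi>) (xword m)"
    by (simp add: fa_lift_single fa_ext_single)
  also have "fcong br \<dots> (Poly_Mapping.single [] c * fa_lift (\<phi> (Poly_Mapping.single (wcnt (xword m)) 1)))"
    by (intro fcong_mult fcong_refl wprod_x xword_Inl)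
  also have "\<dots> = fa_lift (\<phi> (Poly_Mapping.single m c))"
  proof -
    have "Poly_Mapping.single m c = mconst c * Poly_Mapping.single m 1"
      by (simp add: mconst_def mult_single)
    then show ?thesis by (simp add: phi_smult fa_lift_smult)
  qed
  finally show ?case .
next
  case (add f g) then show ?case by (simp add: fa_ext_add fa_lift_add phi_add fcong_add)
qed

lemma chain: "fcong br (fB (\<phi> h)) (\<Sum>k\<in>UNIV. fa_lift (\<phi> (mpderiv k h)) * fB (\<phi> (mvar k)))"
proof (induction h rule: mpoly_induct)
  case (const c) then show ?case by (simp add: phi_mconst phi_0)
next
  case (var i)
  have "(\<Sum>k\<in>UNIV. fa_lift (\<phi> (mpderiv k (mvar i))) * fB (\<phi> (mvar k))) = (\<Sum>k\<in>UNIV. if k = i then fB (\<phi> (mvar k)) else 0)"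
    by (rule sum.cong) (auto simp: mpderiv_mvar phi_1 phi_0 fa_lift_1)
  then show ?case by simp
next
  case (add f g) then show ?case
    by (simp add: phi_add fB_add mpderiv_add fa_lift_add distrib_right sum.distrib fcong_add)
next
  case (mult f g)
  let ?B = "\<lambda>k. fB (\<phi> (mvar k))"
  have "fB (\<phi> (f * g)) = fB (\<phi> f * \<phi> g)" by (simp add: phi_mult)
  also have "fcong br \<dots> (fa_lift (\<phi> f) * fB (\<phi> g) + fa_lift (\<phi> g) * fB (\<phi> f))"
    by (rule fB_mult)
  also have "fcong br \<dots> (fa_lift (\<phi> f) * (\<Sum>k\<in>UNIV. fa_lift (\<phi> (mpderiv k g)) * ?B k)
       + fa_lift (\<phi> g) * (\<Sum>k\<in>UNIV. fa_lift (\<phi> (mpderiv k f)) * ?B k))"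
    by (intro fcong_add fcong_mult fcong_refl mult)
  also have "\<dots> = (\<Sum>k\<in>UNIV. (fa_lift (\<phi> f) * fa_lift (\<phi> (mpderiv k g)) + fa_lift (\<phi> g) * fa_lift (\<phi> (mpderiv k f))) * ?B k)"
    by (simp add: sum_distrib_left distrib_right sum.distrib mult.assoc)
  also have "fcong br \<dots> (\<Sum>k\<in>UNIV. (fa_lift (\<phi> f * \<phi> (mpderiv k g)) + fa_lift (\<phi> g * \<phi> (mpderiv k f))) * ?B k)"
    by (intro fcong_sum fcong_mult fcong_add fcong_refl lift_mult_sym)
  also have "\<dots> = (\<Sum>k\<in>UNIV. fa_lift (\<phi> (mpderiv k (f * g))) * ?B k)"
    by (simp add: mpderiv_leibniz phi_add phi_mult fa_lift_add)
  finally show ?case .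
qed

lemma Phi_Y: "fa_ext (Gphi \<phi>) (fY k) = fB (\<phi> (mvar k))"
  by (simp add: fY_def Gphi_def)

lemma Phi_X: "fa_ext (Gphi \<phi>) (fa_gen (Inl k)) = fa_lift (\<phi> (mvar k))"
  by (simp add: Gphi_def)

lemma Phi_B: "fcong br (fa_ext (Gphi \<phi>) (fB h)) (fB (\<phi> h))"
proof -
  have "fa_ext (Gphi \<phi>) (fB h) = (\<Sum>k\<in>UNIV. fa_ext (Gphi \<phi>) (fa_lift (mpderiv k h)) * fB (\<phi> (mvar k)))"
    by (simp add: fB_def fa_ext_sum fa_ext_mult Phi_Y)
  also have "fcong br \<dots> (\<Sum>k\<in>UNIV. fa_lift (\<phi> (mpderiv k h)) * fB (\<phi> (mvar k)))"
    by (intro fcong_sum fcong_mult fcong_refl Phi_lift)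
  also have "fcong br \<dots> (fB (\<phi> h))"
    by (rule fcong_sym[OF chain])
  finally show ?thesis .
qed

lemma Phi_rels: "r \<in> UP_rels br \<Longrightarrow> fa_ext (Gphi \<phi>) r \<in> UP_ideal br"
proof -
  assume "r \<in> UP_rels br"
  then obtain i j where r: "r = fa_comm (fa_gen (Inl i)) (fa_gen (Inl j)) \<or>
       r = fa_comm (fa_gen (Inr i)) (fa_gen (Inr j))
           - (\<Sum>k\<in>UNIV. fa_mult (fa_lift (mpderiv k (br (mvar i) (mvar j)))) (fa_gen (Inr k))) \<or>
       r = fa_comm (fa_gen (Inr i)) (fa_gen (Inl j)) - fa_lift (br (mvar i) (mvar j))"
    unfolding UP_rels_def by blast
  let ?P = "fa_ext (Gphi \<phi>)"
  have "fcong br (?P r) 0"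
  proof -
    { assume r1: "r = fa_comm (fa_gen (Inl i)) (fa_gen (Inl j))"
      have "?P r = cm (fa_lift (\<phi> (mvar i))) (fa_lift (\<phi> (mvar j)))"
        by (simp add: r1 fa_comm_eq cm_def fa_ext_diff fa_ext_mult Gphi_def)
      also have "fcong br \<dots> 0" by (rule cm_lift_lift)
      finally have ?thesis . }
    moreover
    { assume r2: "r = fa_comm (fa_gen (Inr i)) (fa_gen (Inr j))
           - (\<Sum>k\<in>UNIV. fa_mult (fa_lift (mpderiv k (br (mvar i) (mvar j)))) (fa_gen (Inr k)))"
      have "?P r = cm (fB (\<phi> (mvar i))) (fB (\<phi> (mvar j))) - ?P (fB (br (mvar i) (mvar j)))"
        by (simp add: r2 fa_comm_eq cm_def fa_ext_diff fa_ext_mult Gphi_def fa_mult_eq fB_def fY_def)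
      also have "fcong br \<dots> (fB (br (\<phi> (mvar i)) (\<phi> (mvar j))) - fB (\<phi> (br (mvar i) (mvar j))))"
        by (intro fcong_diff cm_B_B[OF PB] Phi_B)
      also have "\<dots> = 0" by (simp add: LIE)
      finally have ?thesis . }
    moreover
    { assume r3: "r = fa_comm (fa_gen (Inr i)) (fa_gen (Inl j)) - fa_lift (br (mvar i) (mvar j))"
      have "?P r = cm (fB (\<phi> (mvar i))) (fa_lift (\<phi> (mvar j))) - ?P (fa_lift (br (mvar i) (mvar j)))"
        by (simp add: r3 fa_comm_eq cm_def fa_ext_diff fa_ext_mult Gphi_def)
      also have "fcong br \<dots> (fa_lift (br (\<phi> (mvar i)) (\<phi> (mvar j))) - fa_lift (\<phi> (br (mvar i) (mvar j))))"
        by (intro fcong_diff cm_B_lift[OF PB] Phi_lift)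
      also have "\<dots> = 0" by (simp add: LIE)
      finally have ?thesis . }
    ultimately show ?thesis using r by blast
  qed
  then show ?thesis by (simp add: fcong_zero_iff)
qed

end

section \<open>The quotient ring U(P)\<close>

lemma FA_minus: "a \<ominus>\<^bsub>FA TYPE(('v + 'v) list) TYPE('k::field)\<^esub> b = a - b"
proof -
  interpret R: ring "FA TYPE(('v + 'v) list) TYPE('k)" by (rule ring_FA)
  have "\<ominus>\<^bsub>FA TYPE(('v + 'v) list) TYPE('k)\<^esub> b = - b"
    by (rule R.minus_equality) (simp_all add: FA_eq)
  then show ?thesis by (simp add: a_minus_def FA_eq)
qed

context
  fixes br :: "('v::{finite,linorder}, 'k::field) mpoly \<Rightarrow> ('v, 'k) mpoly \<Rightarrow> ('v, 'k) mpoly"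
begin

lemma UP_ring: "ring (UP br)"
  unfolding UP_def by (rule ideal.quotient_is_ring[OF ideal_UP])

lemma carrier_UP: "carrier (UP br) = range (up_class br)"
  by (auto simp: UP_def FactRing_def A_RCOSETS_def' up_class_def FA_eq)

lemma class_in [simp]: "up_class br a \<in> carrier (UP br)"
  by (simp add: carrier_UP)

lemma class_eq: "up_class br a = up_class br b \<longleftrightarrow> fcong br a b"
  using ring.quotient_eq_iff_same_a_r_cos[OF ring_FA ideal_UP, of a b br]
  by (simp only: FA_minus) (simp add: fcong_def up_class_def FA_eq)

lemma class_cong: "fcong br a b \<Longrightarrow> up_class br a = up_class br b"
  by (simp add: class_eq)

lemma class_mult: "up_class br a \<otimes>\<^bsub>UP br\<^esub> up_class br b = up_class br (a * b)"
  using ideal.rcoset_mult_add[OF ideal_UP, of a b br]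
  by (simp add: UP_def FactRing_def up_class_def FA_eq)

lemma class_add: "up_class br a \<oplus>\<^bsub>UP br\<^esub> up_class br b = up_class br (a + b)"
  using ideal.a_rcos_sum[OF ideal_UP, of a b br]
  by (simp add: UP_def FactRing_def up_class_def FA_eq)

lemma UP_zero: "\<zero>\<^bsub>UP br\<^esub> = up_class br 0"
  using ring.a_rcos_zero[OF ring_FA ideal_UP I_zero, of br]
  by (simp add: UP_def FactRing_def up_class_def)

lemma UP_one: "\<one>\<^bsub>UP br\<^esub> = up_class br 1"
  by (simp add: UP_def FactRing_def up_class_def FA_eq)

lemma class_finsum: "finite S \<Longrightarrow> finsum (UP br) (\<lambda>k. up_class br (f k)) S = up_class br (sum f S)"
proof (induction S rule: finite_induct)
  case empty
  interpret U: ring "UP br" by (rule UP_ring)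
  show ?case by (simp add: UP_zero)
next
  case (insert x F)
  interpret U: ring "UP br" by (rule UP_ring)
  have "finsum (UP br) (\<lambda>k. up_class br (f k)) (insert x F) = up_class br (f x) \<oplus>\<^bsub>UP br\<^esub> finsum (UP br) (\<lambda>k. up_class br (f k)) F"
    by (rule U.finsum_insert) (use insert in auto)
  then show ?case using insert by (simp add: class_add)
qed

lemma up_beta_class: "up_beta br f = up_class br (fB f)"
  by (simp add: up_beta_def up_alpha_def up_y_def class_mult class_finsum fB_def fY_def)

lemma up_y_class: "up_y br i = up_class br (fY i)"
  by (simp add: up_y_def fY_def)

lemma up_beta_mvar: "up_beta br (mvar i) = up_y br i"
  by (simp add: up_beta_class fB_mvar up_y_class)

lemma up_alpha_mvar: "up_alpha br (mvar i) = up_class br (fa_gen (Inl i))"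
  by (simp add: up_alpha_def fa_lift_mvar)

lemma class_single: "up_class br (Poly_Mapping.single w c) = up_scalar br c \<otimes>\<^bsub>UP br\<^esub> up_class br (wprod fa_gen w)"
  by (simp add: up_scalar_def class_mult wprod_gen single_mult_single)

lemma hom_unique:
  assumes h: "h \<in> ring_hom (UP br) (UP br)"
    and sc: "\<And>c X. X \<in> carrier (UP br) \<Longrightarrow> h (up_scalar br c \<otimes>\<^bsub>UP br\<^esub> X) = up_scalar br c \<otimes>\<^bsub>UP br\<^esub> h X"
    and gen: "\<And>g. h (up_class br (fa_gen g)) = up_class br (G g)"
  shows "h (up_class br a) = up_class br (fa_ext G a)"
proof (induction a rule: pm_induct)
  case zero
  have "h (\<zero>\<^bsub>UP br\<^esub>) = \<zero>\<^bsub>UP br\<^esub>" by (rule ring_hom_zero[OF h UP_ring UP_ring])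
  then show ?case by (simp add: UP_zero)
next
  case (single w c)
  have wp: "h (up_class br (wprod fa_gen w)) = up_class br (wprod G w)"
  proof (induction w)
    case Nil
    have "h (\<one>\<^bsub>UP br\<^esub>) = \<one>\<^bsub>UP br\<^esub>" by (rule ring_hom_one[OF h])
    then show ?case by (simp add: UP_one wprod_def)
  next
    case (Cons g w)
    have "h (up_class br (wprod fa_gen (g # w))) = h (up_class br (fa_gen g) \<otimes>\<^bsub>UP br\<^esub> up_class br (wprod fa_gen w))"
      by (simp add: class_mult wprod_def)
    also have "\<dots> = h (up_class br (fa_gen g)) \<otimes>\<^bsub>UP br\<^esub> h (up_class br (wprod fa_gen w))"
      by (rule ring_hom_mult[OF h]) auto
    also have "\<dots> = up_class br (wprod G (g # w))"
      using Cons by (simp add: gen class_mult wprod_def)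
    finally show ?case .
  qed
  have "h (up_class br (Poly_Mapping.single w c)) = up_scalar br c \<otimes>\<^bsub>UP br\<^esub> h (up_class br (wprod fa_gen w))"
    by (simp only: class_single sc class_in)
  also have "\<dots> = up_class br (fa_ext G (Poly_Mapping.single w c))"
    by (simp add: wp fa_ext_single up_scalar_def class_mult)
  finally show ?case .
next
  case (add f g)
  have "h (up_class br (f + g)) = h (up_class br f \<oplus>\<^bsub>UP br\<^esub> up_class br g)" by (simp add: class_add)
  also have "\<dots> = h (up_class br f) \<oplus>\<^bsub>UP br\<^esub> h (up_class br g)" by (rule ring_hom_add[OF h]) auto
  finally show ?case using add by (simp add: class_add fa_ext_add)
qed

end

definition psi where
  "psi br \<phi> X = up_class br (fa_ext (Gphi \<phi>) (SOME a. X = up_class br a))"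

lemma carrier_UP_obtain:
  assumes "X \<in> carrier (UP br)" obtains a where "X = up_class br a"
  using assms by (auto simp: carrier_UP)

context
  fixes br :: "('v::{finite,linorder}, 'k::field) mpoly \<Rightarrow> ('v, 'k) mpoly \<Rightarrow> ('v, 'k) mpoly"
    and \<phi> :: "('v, 'k) mpoly \<Rightarrow> ('v, 'k) mpoly"
  assumes PB: "poisson_bracket br" and AH: "ahom \<phi>" and LIE: "\<And>a b. \<phi> (br a b) = br (\<phi> a) (\<phi> b)"
begin

lemma Phi_ideal:
  assumes a: "a \<in> UP_ideal br"
  shows "fa_ext (Gphi \<phi>) a \<in> UP_ideal br"
proof -
  let ?h = "up_class br \<circ> fa_ext (Gphi \<phi>)"
  have hom: "?h \<in> ring_hom (FA TYPE(('v + 'v) list) TYPE('k)) (UP br)"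
  proof -
    have "a_r_coset (FA TYPE(('v + 'v) list) TYPE('k)) (UP_ideal br) \<in> ring_hom (FA TYPE(('v + 'v) list) TYPE('k)) (UP br)"
      unfolding UP_def by (rule ideal.rcos_ring_hom[OF ideal_UP])
    moreover have "up_class br = a_r_coset (FA TYPE(('v + 'v) list) TYPE('k)) (UP_ideal br)"
      by (intro ext) (simp add: up_class_def)
    ultimately show ?thesis by (metis ring_hom_trans fa_ext_ring_hom)
  qed
  have rhr: "ring_hom_ring (FA TYPE(('v + 'v) list) TYPE('k)) (UP br) ?h"
    by (rule ring_hom_ringI2[OF ring_FA UP_ring hom])
  have K: "ideal (a_kernel (FA TYPE(('v + 'v) list) TYPE('k)) (UP br) ?h) (FA TYPE(('v + 'v) list) TYPE('k))"
    by (rule ring_hom_ring.kernel_is_ideal[OF rhr])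
  have "UP_rels br \<subseteq> a_kernel (FA TYPE(('v + 'v) list) TYPE('k)) (UP br) ?h"
  proof
    fix r assume "r \<in> UP_rels br"
    then have "fa_ext (Gphi \<phi>) r \<in> UP_ideal br" by (rule Phi_rels[of br \<phi> r, OF PB AH LIE])
    then have "fcong br (fa_ext (Gphi \<phi>) r) 0" by (simp only: fcong_zero_iff)
    then have "up_class br (fa_ext (Gphi \<phi>) r) = up_class br 0" by (simp only: class_eq)
    then have "?h r = \<zero>\<^bsub>UP br\<^esub>" by (simp only: UP_zero comp_apply)
    moreover have "r \<in> carrier (FA TYPE(('v + 'v) list) TYPE('k))" by (simp add: FA_eq)
    ultimately show "r \<in> a_kernel (FA TYPE(('v + 'v) list) TYPE('k)) (UP br) ?h"
      unfolding a_kernel_def' by blast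
  qed
  then have "UP_ideal br \<subseteq> a_kernel (FA TYPE(('v + 'v) list) TYPE('k)) (UP br) ?h"
    unfolding UP_ideal_def by (rule ring.genideal_minimal[OF ring_FA K])
  with a have "?h a = \<zero>\<^bsub>UP br\<^esub>"
    unfolding a_kernel_def' by blast
  then have "up_class br (fa_ext (Gphi \<phi>) a) = up_class br 0" by (simp only: UP_zero comp_apply)
  then have "fcong br (fa_ext (Gphi \<phi>) a) 0" by (simp only: class_eq)
  then show ?thesis by (simp only: fcong_zero_iff)
qed

lemma Phi_fcong: "fcong br a b \<Longrightarrow> fcong br (fa_ext (Gphi \<phi>) a) (fa_ext (Gphi \<phi>) b)"
  unfolding fcong_def using Phi_ideal by (simp add: fa_ext_diff[symmetric])

lemma psi_class: "psi br \<phi> (up_class br a) = up_class br (fa_ext (Gphi \<phi>) a)"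
proof -
  let ?a = "SOME a'. up_class br a = up_class br a'"
  have "up_class br a = up_class br ?a" by (rule someI) (rule refl)
  then have "fcong br ?a a" by (simp add: class_eq fcong_sym)
  then have "fcong br (fa_ext (Gphi \<phi>) ?a) (fa_ext (Gphi \<phi>) a)" by (rule Phi_fcong)
  then show ?thesis unfolding psi_def by (simp add: class_eq)
qed

lemma psi_hom: "psi br \<phi> \<in> ring_hom (UP br) (UP br)"
proof (rule ring_hom_memI)
  fix X assume "X \<in> carrier (UP br)"
  then obtain a where "X = up_class br a" by (rule carrier_UP_obtain)
  then show "psi br \<phi> X \<in> carrier (UP br)" by (simp add: psi_class)
next
  fix X Y assume "X \<in> carrier (UP br)" "Y \<in> carrier (UP br)"
  then obtain a b where "X = up_class br a" "Y = up_class br b" by (metis carrier_UP_obtain)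
  then show "psi br \<phi> (X \<otimes>\<^bsub>UP br\<^esub> Y) = psi br \<phi> X \<otimes>\<^bsub>UP br\<^esub> psi br \<phi> Y"
    by (simp add: psi_class class_mult fa_ext_mult)
next
  fix X Y assume "X \<in> carrier (UP br)" "Y \<in> carrier (UP br)"
  then obtain a b where "X = up_class br a" "Y = up_class br b" by (metis carrier_UP_obtain)
  then show "psi br \<phi> (X \<oplus>\<^bsub>UP br\<^esub> Y) = psi br \<phi> X \<oplus>\<^bsub>UP br\<^esub> psi br \<phi> Y"
    by (simp add: psi_class class_add fa_ext_add)
next
  show "psi br \<phi> \<one>\<^bsub>UP br\<^esub> = \<one>\<^bsub>UP br\<^esub>" by (simp add: UP_one psi_class)
qed

lemma psi_scalar: "X \<in> carrier (UP br) \<Longrightarrow> psi br \<phi> (up_scalar br c \<otimes>\<^bsub>UP br\<^esub> X) = up_scalar br c \<otimes>\<^bsub>UP br\<^esub> psi br \<phi> X"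
  by (erule carrier_UP_obtain) (simp add: psi_class up_scalar_def class_mult fa_ext_mult)

lemma psi_alpha: "psi br \<phi> (up_alpha br f) = up_alpha br (\<phi> f)"
  unfolding up_alpha_def psi_class class_eq by (rule Phi_lift[of br \<phi>, OF PB AH LIE])

lemma psi_beta: "psi br \<phi> (up_beta br f) = up_beta br (\<phi> f)"
  unfolding up_beta_class psi_class class_eq by (rule Phi_B[of br \<phi>, OF PB AH LIE])

lemma psi_y: "psi br \<phi> (up_y br i) = up_beta br (\<phi> (mvar i))"
  by (simp add: up_y_class psi_class Phi_Y[of br \<phi>, OF PB AH LIE] up_beta_class)

lemma psi_gen: "psi br \<phi> (up_class br (fa_gen g)) = up_class br (Gphi \<phi> g)"
  by (simp add: psi_class)

end

section \<open>Grading\<close>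

definition fa_hom :: "nat \<Rightarrow> ('v, 'k::field) fa \<Rightarrow> bool" where
  "fa_hom d f \<longleftrightarrow> (\<forall>w\<in>Poly_Mapping.keys f. length w = d)"

lemma fa_hom_0 [simp]: "fa_hom d 0" by (simp add: fa_hom_def)

lemma fa_hom_add: "fa_hom d f \<Longrightarrow> fa_hom d g \<Longrightarrow> fa_hom d (f + g)"
  unfolding fa_hom_def using keys_add[of f g] by blast

lemma fa_hom_sum: "(\<And>i. i \<in> S \<Longrightarrow> fa_hom d (f i)) \<Longrightarrow> fa_hom d (sum f S)"
  by (induction S rule: infinite_finite_induct) (auto intro: fa_hom_add)

lemma fa_hom_mult: "fa_hom d f \<Longrightarrow> fa_hom e g \<Longrightarrow> fa_hom (d + e) (f * g)"
  unfolding fa_hom_def using keys_mult[of f g] by (fastforce simp: plus_list_def)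

lemma fa_hom_single: "fa_hom (length w) (Poly_Mapping.single w c)"
  by (simp add: fa_hom_def)

lemma fa_hom_wprod: "(\<And>g. fa_hom 1 (G g)) \<Longrightarrow> fa_hom (length w) (wprod G w)"
proof (induction w)
  case Nil then show ?case using fa_hom_single[of "[]" 1] by (simp add: wprod_def one_fa)
next
  case (Cons g w)
  then show ?case using fa_hom_mult[of 1 "G g" "length w" "wprod G w"] by (simp add: wprod_def)
qed

lemma fa_hom_ext:
  assumes G: "\<And>g. fa_hom 1 (G g)" and f: "fa_hom d f"
  shows "fa_hom d (fa_ext G f)"
  unfolding fa_ext_def
proof (rule fa_hom_sum)
  fix w assume "w \<in> Poly_Mapping.keys f"
  then have "length w = d" using f by (simp add: fa_hom_def)
  moreover have "fa_hom (length ([]::('a+'a) list) + length w) (Poly_Mapping.single [] (Poly_Mapping.lookup f w) * wprod G w)"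
    by (rule fa_hom_mult[OF fa_hom_single fa_hom_wprod[OF G]])
  ultimately show "fa_hom d (Poly_Mapping.single [] (Poly_Mapping.lookup f w) * wprod G w)"
    by simp
qed

lemma mon_deg_add: "mon_deg (m + n) = mon_deg m + mon_deg n"
  by (simp add: mon_deg_def lookup_add sum.distrib)

lemma mon_deg_single1: "mon_deg (Poly_Mapping.single (i::'v::finite) 1) = 1"
proof -
  have "mon_deg (Poly_Mapping.single i 1) = (\<Sum>v\<in>UNIV. if v = i then 1 else 0)"
    unfolding mon_deg_def by (rule sum.cong) (auto simp: lookup_single)
  then show ?thesis by simp
qed

lemma fa_hom_lift:
  assumes "f \<in> mhomog d" shows "fa_hom d (fa_lift f)"
  unfolding fa_lift_def
proof (rule fa_hom_sum)
  fix m assume "m \<in> Poly_Mapping.keys f"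
  then have "length (xword m) = d" using assms by (simp add: mhomog_def length_xword)
  then show "fa_hom d (Poly_Mapping.single (xword m) (Poly_Mapping.lookup f m))"
    using fa_hom_single[of "xword m"] by simp
qed

lemma mpderiv_homog:
  assumes "f \<in> mhomog (Suc d)"
  shows "mpderiv k f \<in> mhomog d"
proof (unfold mhomog_def, intro CollectI ballI)
  fix m assume "m \<in> Poly_Mapping.keys (mpderiv k f)"
  then have "m + Poly_Mapping.single k 1 \<in> Poly_Mapping.keys f"
    by (auto simp: in_keys_iff lookup_mpderiv)
  then have "mon_deg (m + Poly_Mapping.single k 1) = Suc d" using assms by (simp add: mhomog_def)
  then have "mon_deg m + 1 = Suc d" by (metis mon_deg_add mon_deg_single1)
  then show "mon_deg m = d" by simp
qed

lemma fa_hom_B: "f \<in> mhomog 1 \<Longrightarrow> fa_hom 1 (fB f)"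
  unfolding fB_def
proof (rule fa_hom_sum)
  fix k assume "f \<in> mhomog 1"
  then have "fa_hom 0 (fa_lift (mpderiv k f))" by (intro fa_hom_lift mpderiv_homog) simp
  moreover have "fa_hom 1 (fY k)" by (simp add: fY_def fa_gen_def fa_hom_def)
  ultimately show "fa_hom 1 (fa_lift (mpderiv k f) * fY k)" using fa_hom_mult by fastforce
qed

lemma Gphi_hom:
  assumes "\<And>i. \<phi> (mvar i) \<in> mhomog 1" shows "fa_hom 1 (Gphi \<phi> g)"
proof (cases g)
  case (Inl i)
  then have "Gphi \<phi> g = fa_lift (\<phi> (mvar i))" by (simp add: Gphi_def)
  then show ?thesis using fa_hom_lift[OF assms] by metis
next
  case (Inr i)
  then have "Gphi \<phi> g = fB (\<phi> (mvar i))" by (simp add: Gphi_def)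
  then show ?thesis using fa_hom_B[OF assms] by metis
qed

lemma inv_ahom:
  assumes "bij \<phi>" "ahom \<phi>"
  shows "ahom (inv_into UNIV \<phi>)"
proof -
  have fi: "\<phi> (inv_into UNIV \<phi> x) = x" for x using assms(1) by (simp add: bij_is_surj surj_f_inv_f)
  have if_: "inv_into UNIV \<phi> (\<phi> x) = x" for x using assms(1) by (simp add: bij_is_inj)
  have add: "\<phi> (a + b) = \<phi> a + \<phi> b" and mult: "\<phi> (a * b) = \<phi> a * \<phi> b" and one: "\<phi> 1 = 1"
    and sm: "\<phi> (mconst c * a) = mconst c * \<phi> a" for a b c
    using assms(2) unfolding ahom_def by blast+
  show ?thesis unfolding ahom_def
  proof (intro conjI allI)
    fix a b show "inv_into UNIV \<phi> (a + b) = inv_into UNIV \<phi> a + inv_into UNIV \<phi> b"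
      by (metis add fi if_)
  next
    fix a b show "inv_into UNIV \<phi> (a * b) = inv_into UNIV \<phi> a * inv_into UNIV \<phi> b"
      by (metis mult fi if_)
  next
    show "inv_into UNIV \<phi> 1 = 1" by (metis one if_)
  next
    fix c a show "inv_into UNIV \<phi> (mconst c * a) = mconst c * inv_into UNIV \<phi> a"
      by (metis sm fi if_)
  qed
qed

lemma inv_lie:
  assumes "bij \<phi>" "\<And>a b. \<phi> (br a b) = br (\<phi> a) (\<phi> b)"
  shows "inv_into UNIV \<phi> (br a b) = br (inv_into UNIV \<phi> a) (inv_into UNIV \<phi> b)"
proof -
  have fi: "\<phi> (inv_into UNIV \<phi> x) = x" for x using assms(1) by (simp add: bij_is_surj surj_f_inv_f)
  have if_: "inv_into UNIV \<phi> (\<phi> x) = x" for x using assms(1) by (simp add: bij_is_inj)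
  show ?thesis by (metis assms(2) fi if_)
qed

lemma psi_homog:
  assumes PB: "poisson_bracket br" and AH: "ahom \<phi>" and LIE: "\<And>a b. \<phi> (br a b) = br (\<phi> a) (\<phi> b)"
    and H: "\<And>i. \<phi> (mvar i) \<in> mhomog 1"
  shows "psi br \<phi> ` up_homog br d \<subseteq> up_homog br d"
proof
  fix Z assume "Z \<in> psi br \<phi> ` up_homog br d"
  then obtain f where f: "fa_hom d f" and Z: "Z = psi br \<phi> (up_class br f)"
    by (auto simp: up_homog_def fa_hom_def)
  have "Z = up_class br (fa_ext (Gphi \<phi>) f)"
    using Z psi_class[of br \<phi>, OF PB AH LIE] by simp
  moreover have "fa_hom d (fa_ext (Gphi \<phi>) f)"
    by (rule fa_hom_ext[OF Gphi_hom[of \<phi>, OF H] f])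
  ultimately show "Z \<in> up_homog br d"
    by (auto simp: up_homog_def fa_hom_def)
qed

lemma psi_comp_id:
  assumes PB: "poisson_bracket br" and AH: "ahom \<phi>" and LIE: "\<And>a b. \<phi> (br a b) = br (\<phi> a) (\<phi> b)"
    and AH2: "ahom \<chi>" and LIE2: "\<And>a b. \<chi> (br a b) = br (\<chi> a) (\<chi> b)"
    and inv: "\<And>x. \<phi> (\<chi> x) = x"
    and X: "X \<in> carrier (UP br)"
  shows "psi br \<phi> (psi br \<chi> X) = X"
proof -
  let ?h = "psi br \<phi> \<circ> psi br \<chi>"
  have hom: "?h \<in> ring_hom (UP br) (UP br)"
    by (rule ring_hom_trans[OF psi_hom[of br \<chi>, OF PB AH2 LIE2] psi_hom[of br \<phi>, OF PB AH LIE]])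
  have sc: "?h (up_scalar br c \<otimes>\<^bsub>UP br\<^esub> Y) = up_scalar br c \<otimes>\<^bsub>UP br\<^esub> ?h Y" if "Y \<in> carrier (UP br)" for c Y
  proof -
    have "psi br \<chi> Y \<in> carrier (UP br)" using that by (rule ring_hom_closed[OF psi_hom[of br \<chi>, OF PB AH2 LIE2]])
    then show ?thesis using that
      by (simp add: psi_scalar[of br \<chi>, OF PB AH2 LIE2] psi_scalar[of br \<phi>, OF PB AH LIE])
  qed
  have gen: "?h (up_class br (fa_gen g)) = up_class br (fa_gen g)" for g
  proof (cases g)
    case (Inl i)
    have "?h (up_alpha br (mvar i)) = up_alpha br (mvar i)"
      by (simp add: psi_alpha[of br \<chi>, OF PB AH2 LIE2] psi_alpha[of br \<phi>, OF PB AH LIE] inv)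
    then show ?thesis using Inl by (simp add: up_alpha_mvar)
  next
    case (Inr i)
    have "?h (up_beta br (mvar i)) = up_beta br (mvar i)"
      by (simp add: psi_beta[of br \<chi>, OF PB AH2 LIE2] psi_beta[of br \<phi>, OF PB AH LIE] inv)
    then show ?thesis using Inr by (simp add: up_beta_mvar up_y_class fY_def)
  qed
  obtain a where a: "X = up_class br a" using X by (rule carrier_UP_obtain)
  have "?h (up_class br a) = up_class br (fa_ext fa_gen a)"
    by (rule hom_unique[OF hom sc gen])
  then show ?thesis using a by (simp add: fa_ext_id)
qed

theorem lemma2p3:
  fixes br :: "('v::{finite,linorder}, 'k::field_char_0) mpoly \<Rightarrow> ('v, 'k) mpoly \<Rightarrow> ('v, 'k) mpoly"
    and \<phi> :: "('v, 'k) mpoly \<Rightarrow> ('v, 'k) mpoly"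
  assumes "alg_closed_field TYPE('k)"
    and "quadratic_poisson br"
    and "graded_poisson_aut br \<phi>"
  shows "\<exists>\<psi>. up_graded_aut br \<psi>
            \<and> (\<forall>f. up_alpha br (\<phi> f) = \<psi> (up_alpha br f))
            \<and> (\<forall>f. up_beta br (\<phi> f) = \<psi> (up_beta br f))
            \<and> (\<forall>i. \<psi> (up_alpha br (mvar i)) = up_alpha br (\<phi> (mvar i)))
            \<and> (\<forall>i. \<psi> (up_y br i) =
                 (\<Oplus>\<^bsub>UP br\<^esub> j\<in>UNIV. up_alpha br (mpderiv j (\<phi> (mvar i))) \<otimes>\<^bsub>UP br\<^esub> up_y br j))
            \<and> (\<forall>\<psi>'. up_graded_aut br \<psi>'
                  \<and> (\<forall>f. up_alpha br (\<phi> f) = \<psi>' (up_alpha br f))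
                  \<and> (\<forall>f. up_beta br (\<phi> f) = \<psi>' (up_beta br f))
                  \<longrightarrow> (\<forall>X\<in>carrier (UP br). \<psi>' X = \<psi> X))"
proof -
  have PB: "poisson_bracket br" using assms(2) by (simp add: quadratic_poisson_def)
  have G: "bij \<phi>" "\<And>a b. \<phi> (a + b) = \<phi> a + \<phi> b" "\<And>a b. \<phi> (a * b) = \<phi> a * \<phi> b" "\<phi> 1 = 1"
    "\<And>c a. \<phi> (mconst c * a) = mconst c * \<phi> a" "\<And>a b. \<phi> (br a b) = br (\<phi> a) (\<phi> b)"
    "\<And>d. \<phi> ` mhomog d \<subseteq> mhomog d"
    using assms(3) unfolding graded_poisson_aut_def by blast+
  have AH: "ahom \<phi>" using G by (simp add: ahom_def)
  note LIE = G(6)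
  let ?\<chi> = "inv_into UNIV \<phi>"
  have AH2: "ahom ?\<chi>" by (rule inv_ahom[OF G(1) AH])
  have LIE2: "\<And>a b. ?\<chi> (br a b) = br (?\<chi> a) (?\<chi> b)" by (rule inv_lie[of \<phi> br, OF G(1) LIE])
  have fi: "\<phi> (?\<chi> x) = x" for x using G(1) by (simp add: bij_is_surj surj_f_inv_f)
  have if_: "?\<chi> (\<phi> x) = x" for x using G(1) by (simp add: bij_is_inj)
  have H: "\<phi> (mvar i) \<in> mhomog 1" for i
  proof -
    have "mvar i \<in> mhomog 1"
      using mon_deg_single1[of i] by (simp add: mhomog_def mvar_def)
    then show ?thesis using G(7)[of 1] by blast
  qed
  let ?\<psi> = "psi br \<phi>"
  have hom: "?\<psi> \<in> ring_hom (UP br) (UP br)" by (rule psi_hom[of br \<phi>, OF PB AH LIE])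
  have c1: "\<forall>X\<in>carrier (UP br). ?\<psi> (psi br ?\<chi> X) = X"
    using psi_comp_id[of br \<phi> ?\<chi>, OF PB AH LIE AH2 LIE2 fi] by blast
  have c2: "\<forall>X\<in>carrier (UP br). psi br ?\<chi> (?\<psi> X) = X"
    using psi_comp_id[of br ?\<chi> \<phi>, OF PB AH2 LIE2 AH LIE if_] by blast
  have bij: "bij_betw ?\<psi> (carrier (UP br)) (carrier (UP br))"
  proof (rule bij_betw_byWitness[OF c2 c1])
    show "?\<psi> ` carrier (UP br) \<subseteq> carrier (UP br)" using ring_hom_closed[OF hom] by blast
    show "psi br ?\<chi> ` carrier (UP br) \<subseteq> carrier (UP br)"
      using ring_hom_closed[OF psi_hom[of br ?\<chi>, OF PB AH2 LIE2]] by blast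
  qed
  have aut: "up_graded_aut br ?\<psi>"
    unfolding up_graded_aut_def ring_iso_def
    using hom bij psi_scalar[of br \<phi>, OF PB AH LIE] psi_homog[of br \<phi>, OF PB AH LIE H] by blast
  have alpha: "\<forall>f. up_alpha br (\<phi> f) = ?\<psi> (up_alpha br f)"
    using psi_alpha[of br \<phi>, OF PB AH LIE] by simp
  have beta: "\<forall>f. up_beta br (\<phi> f) = ?\<psi> (up_beta br f)"
    using psi_beta[of br \<phi>, OF PB AH LIE] by simp
  have y: "\<forall>i. ?\<psi> (up_y br i) =
                 (\<Oplus>\<^bsub>UP br\<^esub> j\<in>UNIV. up_alpha br (mpderiv j (\<phi> (mvar i))) \<otimes>\<^bsub>UP br\<^esub> up_y br j)"
    using psi_y[of br \<phi>, OF PB AH LIE] by (simp add: up_beta_def)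
  have uniq: "\<forall>X\<in>carrier (UP br). \<psi>' X = ?\<psi> X"
    if "up_graded_aut br \<psi>'" "\<forall>f. up_alpha br (\<phi> f) = \<psi>' (up_alpha br f)"
       "\<forall>f. up_beta br (\<phi> f) = \<psi>' (up_beta br f)" for \<psi>'
  proof
    fix X assume X: "X \<in> carrier (UP br)"
    have h': "\<psi>' \<in> ring_hom (UP br) (UP br)" and sc': "\<And>c Y. Y \<in> carrier (UP br) \<Longrightarrow> \<psi>' (up_scalar br c \<otimes>\<^bsub>UP br\<^esub> Y) = up_scalar br c \<otimes>\<^bsub>UP br\<^esub> \<psi>' Y"
      using that(1) unfolding up_graded_aut_def ring_iso_def by blast+
    have gen: "\<psi>' (up_class br (fa_gen g)) = up_class br (Gphi \<phi> g)" for g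
    proof (cases g)
      case (Inl i)
      have "\<psi>' (up_alpha br (mvar i)) = up_alpha br (\<phi> (mvar i))" using that(2) by simp
      then show ?thesis using Inl by (simp add: fa_lift_mvar Gphi_def up_alpha_def)
    next
      case (Inr i)
      have "\<psi>' (up_beta br (mvar i)) = up_beta br (\<phi> (mvar i))" using that(3) by simp
      then show ?thesis using Inr by (simp add: fB_mvar Gphi_def up_beta_class fY_def)
    qed
    obtain a where a: "X = up_class br a" using X by (rule carrier_UP_obtain)
    have "\<psi>' (up_class br a) = up_class br (fa_ext (Gphi \<phi>) a)"
      by (rule hom_unique[OF h' sc' gen])
    then show "\<psi>' X = ?\<psi> X" using a psi_class[of br \<phi>, OF PB AH LIE] by simp
  qed
  show ?thesis
    apply (rule exI[of _ ?\<psi>])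
    using aut alpha beta y uniq by blast
qed

end
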